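(* Assume (A2) and (A3), and work in the dynamic Lanczos setting. Let $2\le j\le m$, assume each $T_n$ ($1\le n\le j$) has distinct eigenvalues, and let $(\mu_i^{(j)},y_i^{(j)})$ be an eigenpair of $T_j$ with $(y_i^{(j)})^\top R_jy_i^{(j)}\neq 0$. Then there exist integers $s,n$ with $1\le s\le n<j$ such that $$\big|\mu_i^{(j)}-\mu_s^{(n)}\big|\le\frac{2j^2L_{gyy}\varepsilon_j}{\sqrt3\,\big|(y_i^{(j)})^\top R_jy_i^{(j)}\big|}.$$
   Context: Let $f,g:\mathbb{R}^{d_x}\times\mathbb{R}^{d_y}\to\mathbb{R}$ be twice continuously differentiable; norms are Euclidean/spectral and $\|(x,y)\|:=(\|x\|^2+\|y\|^2)^{1/2}$. (A2): $\nabla_xg,\nabla_yg$ are $L_{gx}$-, $L_{gy}$-Lipschitz and $\nabla^2_{xy}g,\nabla^2_{yy}g$ are $L_{gxy}$-, $L_{gyy}$-Lipschitz. (A3): $g(x,\cdot)$ is $\mu_g$-strongly convex for every $x$, $\mu_g>0$; $y^*(x):=\arg\min_y g(x,y)$. Dynamic Lanczos setting: fix $x_1,\dots,x_m\in\mathbb{R}^{d_x}$, $y_1,\dots,y_m\in\mathbb{R}^{d_y}$, $A_i:=\nabla^2_{yy}g(x_i,y_i)$, $A_i^*:=\nabla^2_{yy}g(x_i,y^*(x_i))$, $\bar b\ne0$. Set $q_0=0$, $\beta_1=0$, $q_1=\bar b/\|\bar b\|$, and $u_i=A_iq_i-\beta_iq_{i-1}$, $\alpha_i=q_i^\top u_i$,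 $\omega_i=u_i-\alpha_iq_i$, $\beta_{i+1}=\|\omega_i\|$, $q_{i+1}=\omega_i/\beta_{i+1}$ (assume $\beta_{i+1}\ne0$). $Q_j:=[q_1,\dots,q_j]$; $T_j$ is the $j\times j$ symmetric tridiagonal matrix with diagonal $\alpha_1,\dots,\alpha_j$ and off-diagonal $\beta_2,\dots,\beta_j$. $R_j$ is the strictly upper triangular matrix with $Q_j^\top Q_j=I_j+R_j+R_j^\top$. For each $n$, $T_nY^{(n)}=Y^{(n)}\operatorname{diag}(\mu_1^{(n)},\dots,\mu_n^{(n)})$ with $Y^{(n)}=[y_1^{(n)},\dots,y_n^{(n)}]$ orthogonal and $\mu_1^{(n)}>\dots>\mu_n^{(n)}$. $\varepsilon_{st}:=(1+L_{gx}/\mu_g)\|x_s-x_t\|+\|y_s-y^*(x_s)\|$, $\varepsilon_j:=\max_{1\le s,t\le j}\varepsilon_{st}$. *)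

theory Defs
  imports "HOL-Analysis.Analysis"
begin

text \<open>Dynamic Lanczos iteration.  The state at index i (i \<ge> 1) is the triple
  (q_{i-1}, q_i, beta_i); index 0 gives q_0 = 0.  A i is the matrix A_i (as a linear map).\<close>

fun lanczos :: "(nat \<Rightarrow> 'a::real_inner \<Rightarrow> 'a) \<Rightarrow> 'a \<Rightarrow> nat \<Rightarrow> 'a \<times> 'a \<times> real" where
  "lanczos A b 0 = (0, 0, 0)"
| "lanczos A b (Suc 0) = (0, b /\<^sub>R norm b, 0)"
| "lanczos A b (Suc (Suc i)) =
     (case lanczos A b (Suc i) of (qp, q, bt) \<Rightarrow>
        let u = A (Suc i) q - bt *\<^sub>R qp;
            al = inner q u;
            w = u - al *\<^sub>R q;
            bn = norm w
        in (q, w /\<^sub>R bn, bn))"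

definition lz_q :: "(nat \<Rightarrow> 'a::real_inner \<Rightarrow> 'a) \<Rightarrow> 'a \<Rightarrow> nat \<Rightarrow> 'a" where
  "lz_q A b i = fst (snd (lanczos A b i))"

definition lz_beta :: "(nat \<Rightarrow> 'a::real_inner \<Rightarrow> 'a) \<Rightarrow> 'a \<Rightarrow> nat \<Rightarrow> real" where
  "lz_beta A b i = snd (snd (lanczos A b i))"

definition lz_alpha :: "(nat \<Rightarrow> 'a::real_inner \<Rightarrow> 'a) \<Rightarrow> 'a \<Rightarrow> nat \<Rightarrow> real" where
  "lz_alpha A b i = (case lanczos A b i of (qp, q, bt) \<Rightarrow> inner q (A i q - bt *\<^sub>R qp))"

text \<open>Entries (k,l), 1 \<le> k,l \<le> n, of the tridiagonal T_n (T_n is the leading n\<times>n block).\<close>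
definition lz_T :: "(nat \<Rightarrow> 'a::real_inner \<Rightarrow> 'a) \<Rightarrow> 'a \<Rightarrow> nat \<Rightarrow> nat \<Rightarrow> real" where
  "lz_T A b k l =
     (if k = l then lz_alpha A b k
      else if k = Suc l \<or> l = Suc k then lz_beta A b (max k l) else 0)"

text \<open>Entries (k,l) of the strictly upper triangular R_j with Q_j^T Q_j = I + R_j + R_j^T.\<close>
definition lz_R :: "(nat \<Rightarrow> 'a::real_inner \<Rightarrow> 'a) \<Rightarrow> 'a \<Rightarrow> nat \<Rightarrow> nat \<Rightarrow> real" where
  "lz_R A b k l = (if k < l then inner (lz_q A b k) (lz_q A b l) else 0)"

definition ystar :: "('x \<Rightarrow> 'y \<Rightarrow> real) \<Rightarrow> 'x \<Rightarrow> 'y" where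
  "ystar g x = (THE y. \<forall>y'. g x y \<le> g x y')"

definition eps_st :: "('x \<Rightarrow> 'y \<Rightarrow> real) \<Rightarrow> real \<Rightarrow> real \<Rightarrow> (nat \<Rightarrow> 'x::real_normed_vector)
    \<Rightarrow> (nat \<Rightarrow> 'y::real_normed_vector) \<Rightarrow> nat \<Rightarrow> nat \<Rightarrow> real" where
  "eps_st g Lgx mug xs ys s t =
     (1 + Lgx / mug) * norm (xs s - xs t) + norm (ys s - ystar g (xs s))"

definition eps_j :: "('x \<Rightarrow> 'y \<Rightarrow> real) \<Rightarrow> real \<Rightarrow> real \<Rightarrow> (nat \<Rightarrow> 'x::real_normed_vector)
    \<Rightarrow> (nat \<Rightarrow> 'y::real_normed_vector) \<Rightarrow> nat \<Rightarrow> real" where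
  "eps_j g Lgx mug xs ys j = Max {eps_st g Lgx mug xs ys s t | s t. s \<in> {1..j} \<and> t \<in> {1..j}}"

end

theory Submission
  imports Defs "Jordan_Normal_Form.Determinant"
begin


lemma line_deriv:
  fixes f :: "'a::real_inner \<Rightarrow> real"
  assumes "\<And>y. (f has_derivative (\<lambda>h. inner (G y) h)) (at y)"
  shows "((\<lambda>s. f (c + s *\<^sub>R d)) has_real_derivative inner (G (c + s *\<^sub>R d)) d) (at s)"
proof -
  have 1: "((\<lambda>s. c + s *\<^sub>R d) has_derivative (\<lambda>h. h *\<^sub>R d)) (at s)"
    by (auto intro!: derivative_eq_intros)
  have "((\<lambda>s. f (c + s *\<^sub>R d)) has_derivative (\<lambda>h. inner (G (c + s *\<^sub>R d)) (h *\<^sub>R d))) (at s)"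
    using has_derivative_compose[OF 1 assms] by simp
  then show ?thesis
    unfolding has_real_derivative_iff_has_vector_derivative has_vector_derivative_def by simp
qed

lemma line_deriv2:
  fixes G :: "'a::real_inner \<Rightarrow> 'a"
  assumes "\<And>y. (G has_derivative blinfun_apply (H y)) (at y)"
  shows "((\<lambda>s. inner (G (c + s *\<^sub>R d)) a) has_real_derivative inner (blinfun_apply (H (c + s *\<^sub>R d)) d) a) (at s)"
proof -
  have 1: "((\<lambda>s. c + s *\<^sub>R d) has_derivative (\<lambda>h. h *\<^sub>R d)) (at s)"
    by (auto intro!: derivative_eq_intros)
  have 2: "((\<lambda>s. G (c + s *\<^sub>R d)) has_derivative (\<lambda>h. blinfun_apply (H (c + s *\<^sub>R d)) (h *\<^sub>R d))) (at s)"
    using has_derivative_compose[OF 1 assms] by simp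
  have "((\<lambda>s. inner (G (c + s *\<^sub>R d)) a) has_derivative (\<lambda>h. inner (blinfun_apply (H (c + s *\<^sub>R d)) (h *\<^sub>R d)) a)) (at s)"
    using has_derivative_inner_left[OF 2] by simp
  then show ?thesis
    unfolding has_real_derivative_iff_has_vector_derivative has_vector_derivative_def by (simp add: blinfun.scaleR_right)
qed


lemma mixed_mvt:
  fixes f :: "'a::real_inner \<Rightarrow> real"
  assumes fd: "\<And>y. (f has_derivative (\<lambda>h. inner (G y) h)) (at y)"
  and Gd: "\<And>y. (G has_derivative blinfun_apply (H y)) (at y)"
  and t: "t > 0"
  shows "\<exists>p. norm (p - y) \<le> t * (norm a + norm b) \<and>
     f (y + t *\<^sub>R a + t *\<^sub>R b) - f (y + t *\<^sub>R a) - f (y + t *\<^sub>R b) + f y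
       = t^2 * inner (blinfun_apply (H p) b) a"
proof -
  define \<psi> where "\<psi> s = f ((y + t *\<^sub>R b) + s *\<^sub>R a) - f (y + s *\<^sub>R a)" for s
  have d1: "DERIV \<psi> s :> inner (G ((y + t *\<^sub>R b) + s *\<^sub>R a)) a - inner (G (y + s *\<^sub>R a)) a" for s
    unfolding \<psi>_def by (intro DERIV_diff line_deriv[OF fd])
  obtain \<sigma> where s: "0 < \<sigma>" "\<sigma> < t" and e1: "\<psi> t - \<psi> 0 = (t - 0) *
      (inner (G ((y + t *\<^sub>R b) + \<sigma> *\<^sub>R a)) a - inner (G (y + \<sigma> *\<^sub>R a)) a)"
    using MVT2[OF t d1] by blast
  define kk where "kk r = inner (G ((y + \<sigma> *\<^sub>R a) + r *\<^sub>R b)) a" for r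
  have d2: "DERIV kk r :> inner (blinfun_apply (H ((y + \<sigma> *\<^sub>R a) + r *\<^sub>R b)) b) a" for r
    unfolding kk_def by (rule line_deriv2[OF Gd])
  obtain \<rho> where r: "0 < \<rho>" "\<rho> < t" and e2: "kk t - kk 0 = (t - 0) *
      inner (blinfun_apply (H ((y + \<sigma> *\<^sub>R a) + \<rho> *\<^sub>R b)) b) a"
    using MVT2[OF t d2] by blast
  have e3: "inner (G ((y + t *\<^sub>R b) + \<sigma> *\<^sub>R a)) a - inner (G (y + \<sigma> *\<^sub>R a)) a = kk t - kk 0"
    unfolding kk_def by (simp add: algebra_simps)
  have e4: "\<psi> t - \<psi> 0 = f (y + t *\<^sub>R a + t *\<^sub>R b) - f (y + t *\<^sub>R a) - f (y + t *\<^sub>R b) + f y"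
    unfolding \<psi>_def by (simp add: algebra_simps)
  have nb: "norm (((y + \<sigma> *\<^sub>R a) + \<rho> *\<^sub>R b) - y) \<le> t * (norm a + norm b)"
  proof -
    have "norm (((y + \<sigma> *\<^sub>R a) + \<rho> *\<^sub>R b) - y) = norm (\<sigma> *\<^sub>R a + \<rho> *\<^sub>R b)" by simp
    also have "\<dots> \<le> \<sigma> * norm a + \<rho> * norm b"
      using norm_triangle_ineq[of "\<sigma> *\<^sub>R a" "\<rho> *\<^sub>R b"] s r by simp
    also have "\<dots> \<le> t * norm a + t * norm b"
      using s r by (intro add_mono mult_right_mono) auto
    finally show ?thesis by (simp add: algebra_simps)
  qed
  show ?thesis
    apply (rule exI[of _ "(y + \<sigma> *\<^sub>R a) + \<rho> *\<^sub>R b"])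
    using nb e1 e2 e3 e4 by (simp add: power2_eq_square)
qed


lemma blinfun_inner_bound:
  "\<bar>inner (blinfun_apply M b) a\<bar> \<le> norm M * norm b * norm a"
proof -
  have "\<bar>inner (blinfun_apply M b) a\<bar> \<le> norm (blinfun_apply M b) * norm a"
    by (rule Cauchy_Schwarz_ineq2)
  also have "\<dots> \<le> norm M * norm b * norm a"
    by (intro mult_right_mono norm_blinfun) auto
  finally show ?thesis .
qed

lemma hessian_sym:
  fixes f :: "'a::real_inner \<Rightarrow> real"
  assumes fd: "\<And>y. (f has_derivative (\<lambda>h. inner (G y) h)) (at y)"
  and Gd: "\<And>y. (G has_derivative blinfun_apply (H y)) (at y)"
  and Hc: "continuous_on UNIV H"
  shows "inner (blinfun_apply (H y) b) a = inner (blinfun_apply (H y) a) b"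
proof (rule ccontr)
  assume ne: "inner (blinfun_apply (H y) b) a \<noteq> inner (blinfun_apply (H y) a) b"
  define D where "D = \<bar>inner (blinfun_apply (H y) b) a - inner (blinfun_apply (H y) a) b\<bar>"
  have Dp: "D > 0" using ne unfolding D_def by auto
  define K where "K = norm a * norm b + 1"
  have Kp: "K > 0" unfolding K_def by (simp add: add_nonneg_pos)
  have ic: "isCont H y" using Hc by (simp add: continuous_on_eq_continuous_at)
  obtain \<delta> where dp: "\<delta> > 0" and dH: "\<And>p. dist p y < \<delta> \<Longrightarrow> dist (H p) (H y) < D / (2 * K)"
    using ic[unfolded continuous_at_eps_delta] Dp Kp
    by (metis divide_pos_pos mult_pos_pos zero_less_numeral)
  define t where "t = \<delta> / (2 * (norm a + norm b + 1))"
  have tp: "t > 0" unfolding t_def using dp by (intro divide_pos_pos) (auto intro: add_nonneg_pos)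
  have tb: "t * (norm a + norm b) < \<delta>"
  proof -
    have "t * (norm a + norm b) < t * (2 * (norm a + norm b + 1))"
      using tp by (intro mult_strict_left_mono) (auto simp: add_nonneg_pos)
    also have "\<dots> = \<delta>" unfolding t_def by (simp add: add_nonneg_pos)
      (smt (verit) norm_ge_zero)
    finally show ?thesis .
  qed
  obtain p where p1: "norm (p - y) \<le> t * (norm a + norm b)" and p2:
     "f (y + t *\<^sub>R a + t *\<^sub>R b) - f (y + t *\<^sub>R a) - f (y + t *\<^sub>R b) + f y
       = t^2 * inner (blinfun_apply (H p) b) a"
    using mixed_mvt[OF fd Gd tp] by blast
  obtain p' where p1': "norm (p' - y) \<le> t * (norm b + norm a)" and p2':
     "f (y + t *\<^sub>R b + t *\<^sub>R a) - f (y + t *\<^sub>R b) - f (y + t *\<^sub>R a) + f y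
       = t^2 * inner (blinfun_apply (H p') a) b"
    using mixed_mvt[OF fd Gd tp] by blast
  have "t^2 * inner (blinfun_apply (H p) b) a = t^2 * inner (blinfun_apply (H p') a) b"
    using p2 p2' by (simp add: algebra_simps)
  hence eq: "inner (blinfun_apply (H p) b) a = inner (blinfun_apply (H p') a) b"
    using tp by simp
  have hp: "norm (H p - H y) < D / (2 * K)"
    using dH[of p] p1 tb by (simp add: dist_norm)
  have hp': "norm (H p' - H y) < D / (2 * K)"
    using dH[of p'] p1' tb by (simp add: dist_norm add.commute)
  have key: "norm M * norm u * norm v < D / 2"
    if "u = a \<and> v = b \<or> u = b \<and> v = a" and M: "norm M < D / (2 * K)" for M :: "'a \<Rightarrow>\<^sub>L 'a" and u v
  proof -
    have uv: "norm u * norm v \<le> K" using that unfolding K_def by auto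
    have "norm M * norm u * norm v = norm M * (norm u * norm v)" by simp
    also have "\<dots> \<le> norm M * K"
      using uv by (intro mult_left_mono) auto
    also have "\<dots> < (D / (2 * K)) * K"
      using M Kp by (intro mult_strict_right_mono) auto
    also have "\<dots> = D / 2" using Kp by simp
    finally show ?thesis .
  qed
  have b1: "\<bar>inner (blinfun_apply (H p) b) a - inner (blinfun_apply (H y) b) a\<bar> < D / 2"
  proof -
    have "inner (blinfun_apply (H p) b) a - inner (blinfun_apply (H y) b) a
        = inner (blinfun_apply (H p - H y) b) a"
      by (simp add: blinfun.diff_left inner_diff_left)
    then show ?thesis using blinfun_inner_bound[of "H p - H y" b a] key[OF _ hp, of b a] by auto
  qed
  have b2: "\<bar>inner (blinfun_apply (H p') a) b - inner (blinfun_apply (H y) a) b\<bar> < D / 2"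
  proof -
    have "inner (blinfun_apply (H p') a) b - inner (blinfun_apply (H y) a) b
        = inner (blinfun_apply (H p' - H y) a) b"
      by (simp add: blinfun.diff_left inner_diff_left)
    then show ?thesis using blinfun_inner_bound[of "H p' - H y" a b] key[OF _ hp', of a b] by auto
  qed
  have "D \<le> \<bar>inner (blinfun_apply (H p) b) a - inner (blinfun_apply (H y) b) a\<bar>
          + \<bar>inner (blinfun_apply (H p') a) b - inner (blinfun_apply (H y) a) b\<bar>"
    unfolding D_def using eq by linarith
  then show False using b1 b2 by linarith
qed



lemma partial_y_deriv:
  fixes g :: "'x::real_normed_vector \<Rightarrow> 'y::real_normed_vector \<Rightarrow> 'z::real_normed_vector"
  assumes "((\<lambda>p. g (fst p) (snd p)) has_derivative D) (at (x, y))"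
  shows "(g x has_derivative (\<lambda>h. D (0, h))) (at y)"
proof -
  have 1: "((\<lambda>y'. (x, y')) has_derivative (\<lambda>h. (0, h))) (at y)"
    by (auto intro!: derivative_eq_intros)
  show ?thesis using has_derivative_compose[OF 1 assms] by simp
qed

lemma partial_x_deriv:
  fixes g :: "'x::real_normed_vector \<Rightarrow> 'y::real_normed_vector \<Rightarrow> 'z::real_normed_vector"
  assumes "((\<lambda>p. g (fst p) (snd p)) has_derivative D) (at (x, y))"
  shows "((\<lambda>x'. g x' y) has_derivative (\<lambda>h. D (h, 0))) (at x)"
proof -
  have 1: "((\<lambda>x'. (x', y)) has_derivative (\<lambda>h. (h, 0))) (at x)"
    by (auto intro!: derivative_eq_intros)
  show ?thesis using has_derivative_compose[OF 1 assms] by simp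
qed

lemma Dyy_sym:
  fixes g :: "'x::euclidean_space \<Rightarrow> 'y::euclidean_space \<Rightarrow> real"
  assumes g_diff: "\<And>x y. ((\<lambda>p. g (fst p) (snd p)) has_derivative
                      (\<lambda>h. inner (gx x y) (fst h) + inner (gy x y) (snd h))) (at (x, y))"
    and gy_diff: "\<And>x y. ((\<lambda>p. gy (fst p) (snd p)) has_derivative
                      (\<lambda>h. blinfun_apply (Dyx x y) (fst h) + blinfun_apply (Dyy x y) (snd h))) (at (x, y))"
    and Dyy_cont: "continuous_on UNIV (\<lambda>p. Dyy (fst p) (snd p))"
  shows "inner (blinfun_apply (Dyy x y) a) b = inner a (blinfun_apply (Dyy x y) b)"
proof -
  have fd: "(g x has_derivative (\<lambda>h. inner (gy x y') h)) (at y')" for y'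
    using partial_y_deriv[OF g_diff[of x y']] by simp
  have Gd: "(gy x has_derivative blinfun_apply (Dyy x y')) (at y')" for y'
    using partial_y_deriv[OF gy_diff[of x y']] by (simp add: blinfun.zero_right)
  have Hc: "continuous_on UNIV (Dyy x)"
  proof -
    have "continuous_on UNIV (\<lambda>y'. (x, y'))" by (intro continuous_intros)
    from continuous_on_compose2[OF Dyy_cont this] show ?thesis by simp
  qed
  show ?thesis using hessian_sym[OF fd Gd Hc, of y a b] by (simp add: inner_commute)
qed


lemma sc_growth:
  fixes G :: "'y::real_inner \<Rightarrow> real" and mu :: real
  assumes cv: "convex_on UNIV (\<lambda>y. G y - mu / 2 * (norm y)\<^sup>2)"
    and min: "\<forall>y. G y0 \<le> G y"
  shows "G y0 + mu / 4 * (norm (y - y0))\<^sup>2 \<le> G y"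
proof -
  let ?h = "\<lambda>y. G y - mu / 2 * (norm y)\<^sup>2"
  let ?m = "(1 - 1/2) *\<^sub>R y0 + (1/2) *\<^sub>R y"
  have c: "?h ?m \<le> (1 - 1/2) * ?h y0 + (1/2) * ?h y"
    using convex_onD[OF cv, of "1/2" y0 y] by simp
  have n: "(norm ?m)\<^sup>2 = (norm y0)\<^sup>2 / 2 + (norm y)\<^sup>2 / 2 - (norm (y - y0))\<^sup>2 / 4"
    unfolding power2_norm_eq_inner by (simp add: inner_add_left inner_add_right inner_diff_left inner_diff_right inner_commute algebra_simps add_divide_distrib diff_divide_distrib)
  have "G y0 \<le> G ?m" using min by blast
  moreover have "mu / 2 * (norm ?m)\<^sup>2 = mu / 4 * (norm y0)\<^sup>2 + mu / 4 * (norm y)\<^sup>2 - mu / 8 * (norm (y - y0))\<^sup>2"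
    unfolding n by (simp add: algebra_simps)
  ultimately show ?thesis using c by (simp add: algebra_simps)
qed


lemma sc_exists_min:
  fixes G :: "'y::euclidean_space \<Rightarrow> real" and mu :: real
  assumes cont: "continuous_on UNIV G"
    and cv: "convex_on UNIV (\<lambda>y. G y - mu / 2 * (norm y)\<^sup>2)"
    and mup: "mu > 0"
  shows "\<exists>y0. \<forall>y. G y0 \<le> G y"
proof -
  let ?h = "\<lambda>y. G y - mu / 2 * (norm y)\<^sup>2"
  have hc: "continuous_on UNIV ?h" using cont by (intro continuous_intros)
  obtain e :: 'y where e: "e \<in> Basis" using nonempty_Basis by blast
  have sne: "sphere (0::'y) 1 \<noteq> {}" using e by (auto simp: norm_Basis)
  obtain u0 where u0: "u0 \<in> sphere 0 1" and u0m: "\<forall>u\<in>sphere 0 1. ?h u0 \<le> ?h u"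
    using continuous_attains_inf[OF compact_sphere sne continuous_on_subset[OF hc subset_UNIV]] by blast
  define m where "m = ?h u0"
  define h0 where "h0 = G 0"
  have h00: "?h 0 = h0" unfolding h0_def by simp
  have lowb: "G y \<ge> h0 + norm y * (m - h0) + mu / 2 * (norm y)\<^sup>2" if ny: "norm y \<ge> 1" for y
  proof -
    define n where "n = norm y"
    have np: "n > 0" using ny unfolding n_def by linarith
    have "?h ((1 - 1/n) *\<^sub>R 0 + (1/n) *\<^sub>R y) \<le> (1 - 1/n) * ?h 0 + (1/n) * ?h y"
      using ny np by (intro convex_onD[OF cv]) (auto simp: n_def)
    moreover have "(1/n) *\<^sub>R y \<in> sphere 0 1" using np by (simp add: n_def)
    hence "m \<le> ?h ((1/n) *\<^sub>R y)" using u0m unfolding m_def by blast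
    ultimately have "m \<le> (1 - 1/n) * h0 + (1/n) * ?h y" using h00 by simp
    hence "n * m \<le> n * ((1 - 1/n) * h0 + (1/n) * ?h y)" using np by simp
    also have "\<dots> = n * h0 - h0 + ?h y" using np by (simp add: algebra_simps)
    finally have "n * m \<le> n * h0 - h0 + ?h y" .
    then show ?thesis unfolding n_def by (simp add: algebra_simps)
  qed
  define R where "R = max 1 (2 * \<bar>m - h0\<bar> / mu)"
  have far: "G y \<ge> G 0" if "norm y \<ge> R" for y
  proof -
    have ny: "norm y \<ge> 1" "norm y \<ge> 2 * \<bar>m - h0\<bar> / mu" using that unfolding R_def by auto
    have "mu / 2 * norm y \<ge> mu / 2 * (2 * \<bar>m - h0\<bar> / mu)"
      using ny(2) mup by (intro mult_left_mono) auto
    moreover have "mu / 2 * (2 * \<bar>m - h0\<bar> / mu) = \<bar>m - h0\<bar>" using mup by simp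
    ultimately have "mu / 2 * norm y \<ge> \<bar>m - h0\<bar>" by simp
    hence "norm y * (mu / 2 * norm y) \<ge> norm y * \<bar>m - h0\<bar>" by (intro mult_left_mono) auto
    hence "norm y * (m - h0) + mu / 2 * (norm y)\<^sup>2 \<ge> 0"
    proof -
      have "norm y * (m - h0) \<ge> - (norm y * \<bar>m - h0\<bar>)"
      proof -
        have "norm y * (- \<bar>m - h0\<bar>) \<le> norm y * (m - h0)"
          by (intro mult_left_mono) auto
        then show ?thesis by simp
      qed
      moreover have "mu / 2 * (norm y)\<^sup>2 = norm y * (mu / 2 * norm y)"
        by (simp add: power2_eq_square)
      ultimately show ?thesis using \<open>norm y * (mu / 2 * norm y) \<ge> norm y * \<bar>m - h0\<bar>\<close> by linarith
    qed
    then show ?thesis using lowb[OF ny(1)] unfolding h0_def by linarith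
  qed
  have cbne: "cball (0::'y) R \<noteq> {}" unfolding R_def by (simp add: cball_eq_empty)
  obtain y0 where y0: "y0 \<in> cball 0 R" and y0m: "\<forall>y\<in>cball 0 R. G y0 \<le> G y"
    using continuous_attains_inf[OF compact_cball cbne continuous_on_subset[OF cont subset_UNIV]] by blast
  have "G y0 \<le> G y" for y
  proof (cases "norm y \<le> R")
    case True then have "y \<in> cball 0 R" by simp
    then show ?thesis using y0m by blast
  next
    case False
    have R1: "R \<ge> 1" unfolding R_def by simp
    have "(0::'y) \<in> cball 0 R" using R1 by simp
    then have "G y0 \<le> G 0" using y0m by blast
    moreover have "G 0 \<le> G y" using far[of y] False by linarith
    ultimately show ?thesis by linarith
  qed
  then show ?thesis by blast
qed


lemma ystar_props:
  fixes g :: "'x::real_normed_vector \<Rightarrow> 'y::euclidean_space \<Rightarrow> real"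
  assumes gd: "\<And>y. (g x has_derivative D y) (at y)"
    and cv: "convex_on UNIV (\<lambda>y. g x y - mug / 2 * (norm y)\<^sup>2)"
    and mup: "mug > 0"
  shows "\<forall>y. g x (ystar g x) \<le> g x y"
    and "\<And>y. g x (ystar g x) + mug / 4 * (norm (y - ystar g x))\<^sup>2 \<le> g x y"
proof -
  have cont: "continuous_on UNIV (g x)"
    using gd by (intro continuous_at_imp_continuous_on) (auto intro: has_derivative_continuous)
  obtain y0 where y0: "\<forall>y. g x y0 \<le> g x y" using sc_exists_min[OF cont cv mup] by blast
  have gr: "\<And>y. g x y0 + mug / 4 * (norm (y - y0))\<^sup>2 \<le> g x y"
    using sc_growth[OF cv y0] by blast
  have "ystar g x = y0"
    unfolding ystar_def
  proof (rule the_equality)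
    show "\<forall>y'. g x y0 \<le> g x y'" by (rule y0)
  next
    fix y assume y: "\<forall>y'. g x y \<le> g x y'"
    have "g x y0 + mug / 4 * (norm (y - y0))\<^sup>2 \<le> g x y" by (rule gr)
    moreover have "g x y \<le> g x y0" using y by blast
    ultimately have "mug / 4 * (norm (y - y0))\<^sup>2 \<le> 0" by linarith
    then have "(norm (y - y0))\<^sup>2 \<le> 0" using mup by (simp add: mult_le_0_iff)
    then show "y = y0" by simp
  qed
  then show "\<forall>y. g x (ystar g x) \<le> g x y" and "\<And>y. g x (ystar g x) + mug / 4 * (norm (y - ystar g x))\<^sup>2 \<le> g x y"
    using y0 gr by auto
qed


lemma lip_nonneg:
  fixes f :: "'x::real_normed_vector \<Rightarrow> 'y::euclidean_space \<Rightarrow> 'z::real_normed_vector"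
  assumes "\<And>x y x' y'. norm (f x y - f x' y') \<le> L * norm ((x, y) - (x', y'))"
  shows "L \<ge> 0"
proof -
  obtain e :: 'y where e: "e \<in> Basis" using nonempty_Basis by blast
  have ne: "norm e = 1" using e by (simp add: norm_Basis)
  have "0 \<le> L * norm ((0::'x, 0::'y) - (0, e))" using assms[of 0 0 0 e] norm_ge_zero order_trans by blast
  then have "0 \<le> L * norm e" by (simp add: norm_Pair)
  then show ?thesis using ne by simp
qed

lemma ystar_lip:
  fixes g :: "'x::euclidean_space \<Rightarrow> 'y::euclidean_space \<Rightarrow> real"
  assumes g_diff: "\<And>x y. ((\<lambda>p. g (fst p) (snd p)) has_derivative
                      (\<lambda>h. inner (gx x y) (fst h) + inner (gy x y) (snd h))) (at (x, y))"
    and A2_gx: "\<And>x y x' y'. norm (gx x y - gx x' y') \<le> Lgx * norm ((x, y) - (x', y'))"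
    and mup: "mug > 0"
    and A3: "\<And>x. convex_on UNIV (\<lambda>y. g x y - mug / 2 * (norm y)\<^sup>2)"
  shows "norm (ystar g x - ystar g x') \<le> 2 * Lgx / mug * norm (x - x')"
proof -
  have gdy: "\<And>x y. (g x has_derivative (\<lambda>h. inner (gy x y) h)) (at y)"
    using partial_y_deriv[OF g_diff] by simp
  have gdx: "\<And>x y. ((\<lambda>x'. g x' y) has_derivative (\<lambda>h. inner (gx x y) h)) (at x)"
    using partial_x_deriv[OF g_diff] by simp
  define y where "y = ystar g x"
  define y' where "y' = ystar g x'"
  define d where "d = norm (y' - y)"
  have g1: "g x y + mug / 4 * d\<^sup>2 \<le> g x y'"
    using ystar_props(2)[where g=g and x=x and D="\<lambda>y h. inner (gy x y) h" and mug=mug, OF gdy A3 mup, of y'] unfolding y_def d_def by simp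
  have g2: "g x' y' + mug / 4 * d\<^sup>2 \<le> g x' y"
    using ystar_props(2)[where g=g and x=x' and D="\<lambda>y h. inner (gy x' y) h" and mug=mug, OF gdy A3 mup, of y] unfolding y'_def d_def by (simp add: norm_minus_commute)
  define F where "F z = g z y' - g z y" for z
  have Fd: "(F has_derivative (\<lambda>h. inner (gx z y' - gx z y) h)) (at z within UNIV)" for z
    unfolding F_def using has_derivative_diff[OF gdx[where x=z and y=y'] gdx[where x=z and y=y]]
    by (simp add: inner_diff_left)
  have Fb: "onorm (\<lambda>h. inner (gx z y' - gx z y) h) \<le> Lgx * d" for z
  proof (rule onorm_le)
    fix h
    have "norm (inner (gx z y' - gx z y) h) \<le> norm (gx z y' - gx z y) * norm h"
      by (simp add: Cauchy_Schwarz_ineq2)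
    also have "\<dots> \<le> Lgx * norm ((z, y') - (z, y)) * norm h"
      using A2_gx[of z y' z y] by (intro mult_right_mono) auto
    also have "norm ((z, y') - (z, y)) = d" unfolding d_def by (simp add: norm_Pair)
    finally show "norm (inner (gx z y' - gx z y) h) \<le> Lgx * d * norm h" .
  qed
  have "norm (F x - F x') \<le> Lgx * d * norm (x - x')"
    by (rule differentiable_bound[OF convex_UNIV Fd Fb]) auto
  moreover have "mug / 2 * d\<^sup>2 \<le> F x - F x'" using g1 g2 unfolding F_def by simp
  ultimately have key: "mug / 2 * d\<^sup>2 \<le> Lgx * d * norm (x - x')" by simp
  show ?thesis
  proof (cases "d = 0")
    case True
    have "Lgx \<ge> 0" by (rule lip_nonneg[OF A2_gx])
    then have "0 \<le> 2 * Lgx / mug * norm (x - x')" using mup by simp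
    then show ?thesis using True unfolding d_def y_def y'_def by (simp add: norm_minus_commute)
  next
    case False
    then have dp: "d > 0" unfolding d_def by simp
    have "mug / 2 * d * d \<le> Lgx * norm (x - x') * d" using key by (simp add: power2_eq_square mult_ac)
    then have "mug / 2 * d \<le> Lgx * norm (x - x')" using dp by simp
    then have "d \<le> 2 * Lgx / mug * norm (x - x')" using mup by (simp add: field_simps)
    then show ?thesis unfolding d_def y_def y'_def by (simp add: norm_minus_commute)
  qed
qed


lemma eps_j_ge:
  assumes "s \<in> {1..j}" "t \<in> {1..j}"
  shows "eps_st g Lgx mug xs ys s t \<le> eps_j g Lgx mug xs ys j"
proof -
  have "finite {eps_st g Lgx mug xs ys s t | s t. s \<in> {1..j} \<and> t \<in> {1..j}}"
    by (rule finite_image_set2) auto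
  moreover have "eps_st g Lgx mug xs ys s t \<in> {eps_st g Lgx mug xs ys s t | s t. s \<in> {1..j} \<and> t \<in> {1..j}}"
    using assms by blast
  ultimately show ?thesis unfolding eps_j_def by (rule Max_ge)
qed

lemma eps_st_nonneg:
  assumes "Lgx \<ge> 0" "mug > 0"
  shows "eps_st g Lgx mug xs ys s t \<ge> 0"
  unfolding eps_st_def using assms by simp

lemma Dyy_diff_bound:
  fixes g :: "'x::euclidean_space \<Rightarrow> 'y::euclidean_space \<Rightarrow> real"
  assumes g_diff: "\<And>x y. ((\<lambda>p. g (fst p) (snd p)) has_derivative
                      (\<lambda>h. inner (gx x y) (fst h) + inner (gy x y) (snd h))) (at (x, y))"
    and A2_gx: "\<And>x y x' y'. norm (gx x y - gx x' y') \<le> Lgx * norm ((x, y) - (x', y'))"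
    and A2_gyy: "\<And>x y x' y'. norm (Dyy x y - Dyy x' y') \<le> Lgyy * norm ((x, y) - (x', y'))"
    and mup: "mug > 0"
    and A3: "\<And>x. convex_on UNIV (\<lambda>y. g x y - mug / 2 * (norm y)\<^sup>2)"
    and st: "s \<in> {1..j}" "t \<in> {1..j}"
  shows "norm (Dyy (xs s) (ys s) - Dyy (xs t) (ys t)) \<le> 2 * Lgyy * eps_j g Lgx mug xs ys j"
proof -
  have L0: "Lgyy \<ge> 0" by (rule lip_nonneg[OF A2_gyy])
  have Lx0: "Lgx \<ge> 0" by (rule lip_nonneg[OF A2_gx])
  define dx where "dx = norm (xs s - xs t)"
  have ly: "norm (ystar g (xs s) - ystar g (xs t)) \<le> 2 * Lgx / mug * dx"
    unfolding dx_def by (rule ystar_lip[OF g_diff A2_gx mup A3])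
  have dy: "norm (ys s - ys t) \<le> norm (ys s - ystar g (xs s)) + norm (ystar g (xs s) - ystar g (xs t))
      + norm (ys t - ystar g (xs t))"
  proof -
    have "ys s - ys t = (ys s - ystar g (xs s)) + (ystar g (xs s) - ystar g (xs t)) - (ys t - ystar g (xs t))"
      by simp
    then have e0: "norm (ys s - ys t) = norm ((ys s - ystar g (xs s)) + (ystar g (xs s) - ystar g (xs t)) - (ys t - ystar g (xs t)))"
      by (rule arg_cong)
    moreover have "norm ((ys s - ystar g (xs s)) + (ystar g (xs s) - ystar g (xs t)) - (ys t - ystar g (xs t)))
       \<le> norm ((ys s - ystar g (xs s)) + (ystar g (xs s) - ystar g (xs t))) + norm (ys t - ystar g (xs t))"
      by (rule norm_triangle_ineq4)
    moreover have "norm ((ys s - ystar g (xs s)) + (ystar g (xs s) - ystar g (xs t)))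
       \<le> norm (ys s - ystar g (xs s)) + norm (ystar g (xs s) - ystar g (xs t))"
      by (rule norm_triangle_ineq)
    ultimately show ?thesis by linarith
  qed
  have "norm ((xs s, ys s) - (xs t, ys t)) \<le> dx + norm (ys s - ys t)"
    unfolding dx_def using norm_Pair_le[of "xs s - xs t" "ys s - ys t"] by simp
  also have "\<dots> \<le> eps_st g Lgx mug xs ys s t + eps_st g Lgx mug xs ys t s"
  proof -
    have "dx + norm (ys s - ys t) \<le> dx + 2 * Lgx / mug * dx + norm (ys s - ystar g (xs s)) + norm (ys t - ystar g (xs t))"
      using dy ly by linarith
    also have "\<dots> \<le> eps_st g Lgx mug xs ys s t + eps_st g Lgx mug xs ys t s"
      unfolding eps_st_def dx_def using Lx0 mup
      by (simp add: norm_minus_commute[of "xs t"] field_simps)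
    finally show ?thesis .
  qed
  also have "\<dots> \<le> 2 * eps_j g Lgx mug xs ys j"
    using eps_j_ge[OF st, of g Lgx mug xs ys] eps_j_ge[OF st(2) st(1), of g Lgx mug xs ys] by simp
  finally have "norm ((xs s, ys s) - (xs t, ys t)) \<le> 2 * eps_j g Lgx mug xs ys j" .
  then have "Lgyy * norm ((xs s, ys s) - (xs t, ys t)) \<le> Lgyy * (2 * eps_j g Lgx mug xs ys j)"
    using L0 by (intro mult_left_mono)
  then show ?thesis using A2_gyy[of "xs s" "ys s" "xs t" "ys t"] by simp
qed


lemma lanczos_Suc:
  "lanczos A b (Suc k) = (lz_q A b k, lz_q A b (Suc k), lz_beta A b (Suc k))"
  by (cases k) (simp_all add: lz_q_def lz_beta_def Let_def split: prod.split)

lemma lz_q0: "lz_q A b 0 = 0" by (simp add: lz_q_def)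
lemma lz_beta1: "lz_beta A b (Suc 0) = 0" by (simp add: lz_beta_def)
lemma lz_q1: "lz_q A b (Suc 0) = b /\<^sub>R norm b" by (simp add: lz_q_def)

lemma lz_alpha_Suc: "lz_alpha A b (Suc k) =
   inner (lz_q A b (Suc k)) (A (Suc k) (lz_q A b (Suc k)) - lz_beta A b (Suc k) *\<^sub>R lz_q A b k)"
  by (simp add: lz_alpha_def lanczos_Suc)

lemma lz_step_raw:
  "lanczos A b (Suc (Suc k)) = (lz_q A b (Suc k), (A (Suc k) (lz_q A b (Suc k)) - lz_beta A b (Suc k) *\<^sub>R lz_q A b k - lz_alpha A b (Suc k) *\<^sub>R lz_q A b (Suc k)) /\<^sub>R norm (A (Suc k) (lz_q A b (Suc k)) - lz_beta A b (Suc k) *\<^sub>R lz_q A b k - lz_alpha A b (Suc k) *\<^sub>R lz_q A b (Suc k)), norm (A (Suc k) (lz_q A b (Suc k)) - lz_beta A b (Suc k) *\<^sub>R lz_q A b k - lz_alpha A b (Suc k) *\<^sub>R lz_q A b (Suc k)))"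
  by (simp only: lanczos.simps(3) lanczos_Suc[of A b k] prod.case Let_def lz_alpha_Suc)

lemma lz_step:
  "lz_q A b (Suc (Suc k)) = (A (Suc k) (lz_q A b (Suc k)) - lz_beta A b (Suc k) *\<^sub>R lz_q A b k - lz_alpha A b (Suc k) *\<^sub>R lz_q A b (Suc k)) /\<^sub>R norm (A (Suc k) (lz_q A b (Suc k)) - lz_beta A b (Suc k) *\<^sub>R lz_q A b k - lz_alpha A b (Suc k) *\<^sub>R lz_q A b (Suc k))"
  "lz_beta A b (Suc (Suc k)) = norm (A (Suc k) (lz_q A b (Suc k)) - lz_beta A b (Suc k) *\<^sub>R lz_q A b k - lz_alpha A b (Suc k) *\<^sub>R lz_q A b (Suc k))"
  unfolding lz_q_def[of A b "Suc (Suc k)"] lz_beta_def[of A b "Suc (Suc k)"] lz_step_raw by simp_all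

lemma lz_rec:
  assumes "1 \<le> k"
  shows "A k (lz_q A b k) = lz_beta A b k *\<^sub>R lz_q A b (k - 1) + lz_alpha A b k *\<^sub>R lz_q A b k
           + lz_beta A b (Suc k) *\<^sub>R lz_q A b (Suc k)"
proof -
  obtain k' where k: "k = Suc k'" using assms by (cases k) auto
  define u where "u = A (Suc k') (lz_q A b (Suc k')) - lz_beta A b (Suc k') *\<^sub>R lz_q A b k'"
  define w where "w = u - lz_alpha A b (Suc k') *\<^sub>R lz_q A b (Suc k')"
  have s: "lz_q A b (Suc (Suc k')) = w /\<^sub>R norm w" "lz_beta A b (Suc (Suc k')) = norm w"
    unfolding u_def w_def by (rule lz_step)+
  have "lz_beta A b (Suc (Suc k')) *\<^sub>R lz_q A b (Suc (Suc k')) = w"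
    unfolding s by (cases "w = 0") auto
  then show ?thesis unfolding k using u_def w_def by (simp add: algebra_simps)
qed

lemma lz_unit:
  assumes b: "b \<noteq> 0" and bnz: "\<And>k. 1 \<le> k \<Longrightarrow> k < m \<Longrightarrow> lz_beta A b (Suc k) \<noteq> 0"
    and k: "1 \<le> k" "k \<le> m"
  shows "norm (lz_q A b k) = 1"
proof (cases k)
  case 0 then show ?thesis using k by simp
next
  case (Suc k1)
  show ?thesis
  proof (cases k1)
    case 0 then show ?thesis using Suc b by (simp add: lz_q1)
  next
    case (Suc k')
    define u where "u = A (Suc k') (lz_q A b (Suc k')) - lz_beta A b (Suc k') *\<^sub>R lz_q A b k'"
    define w where "w = u - lz_alpha A b (Suc k') *\<^sub>R lz_q A b (Suc k')"
    have s: "lz_q A b (Suc (Suc k')) = w /\<^sub>R norm w" "lz_beta A b (Suc (Suc k')) = norm w"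
      unfolding u_def w_def by (rule lz_step)+
    have "lz_beta A b (Suc (Suc k')) \<noteq> 0" using bnz[of "Suc k'"] k \<open>k = Suc k1\<close> Suc by simp
    then have "norm w \<noteq> 0" using s by simp
    then show ?thesis using s \<open>k = Suc k1\<close> Suc by simp
  qed
qed

lemma lz_orth_next:
  assumes "1 \<le> k" and "norm (lz_q A b k) = 1"
  shows "inner (lz_q A b k) (lz_q A b (Suc k)) = 0"
proof -
  obtain k' where k: "k = Suc k'" using assms by (cases k) auto
  define u where "u = A (Suc k') (lz_q A b (Suc k')) - lz_beta A b (Suc k') *\<^sub>R lz_q A b k'"
  define w where "w = u - lz_alpha A b (Suc k') *\<^sub>R lz_q A b (Suc k')"
  have s: "lz_q A b (Suc (Suc k')) = w /\<^sub>R norm w"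
    unfolding u_def w_def by (rule lz_step)+
  have qq: "inner (lz_q A b (Suc k')) (lz_q A b (Suc k')) = 1"
    using assms(2) k by (simp add: power2_norm_eq_inner[symmetric])
  have "inner (lz_q A b (Suc k')) w = 0"
    unfolding w_def u_def lz_alpha_Suc by (simp add: inner_diff_right qq)
  then show ?thesis unfolding k s by simp
qed


lemma lz_T_sym: "lz_T A b k l = lz_T A b l k"
  unfolding lz_T_def by (auto simp: max.commute)

lemma lz_T_split: "lz_T A b p l = (if l = p then lz_alpha A b p else 0)
   + (if Suc l = p then lz_beta A b p else 0) + (if l = Suc p then lz_beta A b (Suc p) else 0)"
  unfolding lz_T_def by auto

lemma T_row:
  fixes v :: "nat \<Rightarrow> real"
  assumes p: "1 \<le> p" "p \<le> N"
  shows "(\<Sum>l = 1..N. lz_T A b p l * v l) = lz_beta A b p * v (p - 1) + lz_alpha A b p * v p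
     + (if Suc p \<le> N then lz_beta A b (Suc p) * v (Suc p) else 0)"
proof -
  have "(\<Sum>l = 1..N. lz_T A b p l * v l) =
      (\<Sum>l = 1..N. (if l = p then lz_alpha A b p * v p else 0))
    + (\<Sum>l = 1..N. (if l = p - 1 then (if 2 \<le> p then lz_beta A b p * v (p - 1) else 0) else 0))
    + (\<Sum>l = 1..N. (if l = Suc p then lz_beta A b (Suc p) * v (Suc p) else 0))"
    unfolding sum.distrib[symmetric] lz_T_split using p
    by (intro sum.cong refl) auto
  also have "\<dots> = lz_alpha A b p * v p + (if 2 \<le> p then lz_beta A b p * v (p - 1) else 0)
     + (if Suc p \<le> N then lz_beta A b (Suc p) * v (Suc p) else 0)"
    using p by (simp only: sum.delta finite_atLeastAtMost) auto
  also have "(if 2 \<le> p then lz_beta A b p * v (p - 1) else 0) = lz_beta A b p * v (p - 1)"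
    using p by (cases "p = 1") (auto simp: lz_beta1)
  finally show ?thesis by simp
qed


lemma X_inner:
  fixes G :: "nat \<Rightarrow> nat \<Rightarrow> real" and al be v :: "nat \<Rightarrow> real"
  assumes Gkk: "G k k = 1" and Gk1: "G k (Suc k) = 0" and N: "k \<le> N"
  shows "(\<Sum>l = Suc k..N. v l * (be l * G k (l - 1) + al l * G k l + be (Suc l) * G k (Suc l)))
    = (\<Sum>p = Suc k..N. G k p * (be p * v (p - 1) + al p * v p
                     + (if Suc p \<le> N then be (Suc p) * v (Suc p) else 0)))
      + (if k < N then be (Suc k) * v (Suc k) + be (Suc N) * v N * G k (Suc N) else 0)"
  using N
proof (induction N rule: dec_induct)
  case base then show ?case by simp
next
  case (step N)
  have s1: "(\<Sum>p = Suc k..Suc N. G k p * (be p * v (p - 1) + al p * v p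
                     + (if Suc p \<le> Suc N then be (Suc p) * v (Suc p) else 0)))
     = (\<Sum>p = Suc k..N. G k p * (be p * v (p - 1) + al p * v p
                     + (if Suc p \<le> N then be (Suc p) * v (Suc p) else 0)))
       + (if k < N then G k N * be (Suc N) * v (Suc N) else 0)
       + G k (Suc N) * (be (Suc N) * v N + al (Suc N) * v (Suc N))"
  proof -
    have a: "(\<Sum>p = Suc k..N. G k p * (be p * v (p - 1) + al p * v p
                     + (if Suc p \<le> Suc N then be (Suc p) * v (Suc p) else 0)))
       = (\<Sum>p = Suc k..N. G k p * (be p * v (p - 1) + al p * v p
                     + (if Suc p \<le> N then be (Suc p) * v (Suc p) else 0))
             + (if p = N then G k N * be (Suc N) * v (Suc N) else 0))"
    proof (intro sum.cong refl)
      fix p assume "p \<in> {Suc k..N}"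
      then have "p \<le> N" by simp
      then show "G k p * (be p * v (p - 1) + al p * v p
                     + (if Suc p \<le> Suc N then be (Suc p) * v (Suc p) else 0))
          = G k p * (be p * v (p - 1) + al p * v p
                     + (if Suc p \<le> N then be (Suc p) * v (Suc p) else 0))
             + (if p = N then G k N * be (Suc N) * v (Suc N) else 0)"
        by (cases "p = N") (simp_all add: algebra_simps)
    qed
    also have "\<dots> = (\<Sum>p = Suc k..N. G k p * (be p * v (p - 1) + al p * v p
                     + (if Suc p \<le> N then be (Suc p) * v (Suc p) else 0)))
       + (if k < N then G k N * be (Suc N) * v (Suc N) else 0)"
      by (simp only: sum.distrib sum.delta' finite_atLeastAtMost) (simp add: Suc_le_eq)
    finally show ?thesis using step(1) by (simp add: algebra_simps)
  qed
  have l1: "(\<Sum>l = Suc k..Suc N. v l * (be l * G k (l - 1) + al l * G k l + be (Suc l) * G k (Suc l)))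
     = (\<Sum>l = Suc k..N. v l * (be l * G k (l - 1) + al l * G k l + be (Suc l) * G k (Suc l)))
       + v (Suc N) * (be (Suc N) * G k N + al (Suc N) * G k (Suc N) + be (Suc (Suc N)) * G k (Suc (Suc N)))"
    using step(1) by (simp add: sum.cl_ivl_Suc)
  show ?case
    unfolding s1 l1 step(3) using step(1) Gkk Gk1
    by (cases "k < N") (auto simp: algebra_simps)
qed


lemma Y_inner:
  fixes G :: "nat \<Rightarrow> nat \<Rightarrow> real" and al be v :: "nat \<Rightarrow> real"
  assumes Gl0: "G l 0 = 0" and be1: "be (Suc 0) = 0"
  shows "(\<Sum>k = 1..M. v k * (be k * G l (k - 1) + al k * G l k + be (Suc k) * G l (Suc k)))
    = (\<Sum>p = 1..M. G l p * (be p * v (p - 1) + al p * v p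
                     + (if Suc p \<le> M then be (Suc p) * v (Suc p) else 0)))
      + be (Suc M) * v M * G l (Suc M)"
proof (induction M)
  case 0 then show ?case using be1 by simp
next
  case (Suc M)
  have a: "(\<Sum>p = 1..M. G l p * (be p * v (p - 1) + al p * v p
                     + (if Suc p \<le> Suc M then be (Suc p) * v (Suc p) else 0)))
       = (\<Sum>p = 1..M. G l p * (be p * v (p - 1) + al p * v p
                     + (if Suc p \<le> M then be (Suc p) * v (Suc p) else 0))
             + (if p = M then G l M * be (Suc M) * v (Suc M) else 0))"
  proof (intro sum.cong refl)
    fix p assume "p \<in> {1..M}"
    then have "p \<le> M" by simp
    then show "G l p * (be p * v (p - 1) + al p * v p
                     + (if Suc p \<le> Suc M then be (Suc p) * v (Suc p) else 0))
          = G l p * (be p * v (p - 1) + al p * v p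
                     + (if Suc p \<le> M then be (Suc p) * v (Suc p) else 0))
             + (if p = M then G l M * be (Suc M) * v (Suc M) else 0)"
      by (cases "p = M") (simp_all add: algebra_simps)
  qed
  also have "\<dots> = (\<Sum>p = 1..M. G l p * (be p * v (p - 1) + al p * v p
                     + (if Suc p \<le> M then be (Suc p) * v (Suc p) else 0)))
       + G l M * be (Suc M) * v (Suc M)"
    using Gl0 by (cases M) (simp_all only: sum.distrib sum.delta' finite_atLeastAtMost, simp_all)
  finally have a': "(\<Sum>p = 1..M. G l p * (be p * v (p - 1) + al p * v p
                     + (if Suc p \<le> Suc M then be (Suc p) * v (Suc p) else 0))) =
       (\<Sum>p = 1..M. G l p * (be p * v (p - 1) + al p * v p
                     + (if Suc p \<le> M then be (Suc p) * v (Suc p) else 0)))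
       + G l M * be (Suc M) * v (Suc M)" .
  show ?case
    unfolding sum.cl_ivl_Suc a' Suc.IH by (simp add: algebra_simps)
qed


lemma sum_if_less_right:
  "(\<Sum>l = 1..n. if k < l then f l else 0) = (\<Sum>l = Suc k..n. (f l :: real))"
proof -
  have "(\<Sum>l = 1..n. if k < l then f l else 0) = sum f ({1..n} \<inter> {l. k < l})"
    by (simp add: sum.inter_restrict)
  also have "{1..n} \<inter> {l. k < l} = {Suc k..n}" by auto
  finally show ?thesis .
qed

lemma sum_upper:
  "(\<Sum>l = 1..n. if k < l then a * f l else 0) = a * (\<Sum>l = Suc k..n. (f l :: real))"
proof -
  have "(\<Sum>l = 1..n. if k < l then a * f l else 0) = (\<Sum>l = 1..n. a * (if k < l then f l else 0))"
    by (intro sum.cong refl) auto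
  also have "\<dots> = a * (\<Sum>l = Suc k..n. f l)"
    by (simp only: sum_distrib_left[symmetric] sum_if_less_right)
  finally show ?thesis .
qed

lemma sum_if_less_left:
  fixes n k l :: nat
  assumes "1 \<le> l"
  shows "(\<Sum>k = 1..n. if k < l \<and> l \<le> n then f k else 0) = (if l \<le> n then (\<Sum>k = 1..l - 1. (f k :: real)) else 0)"
proof (cases "l \<le> n")
  case True
  have "(\<Sum>k = 1..n. if k < l \<and> l \<le> n then f k else 0) = sum f ({1..n} \<inter> {k. k < l})"
    using True by (simp add: sum.inter_restrict)
  also have "{1..n} \<inter> {k. k < l} = {1..l - 1}" using True assms by auto
  finally show ?thesis using True by simp
qed simp

lemma sum_lower:
  fixes n l :: nat
  assumes "1 \<le> l" "l \<le> n"
  shows "(\<Sum>k = 1..n. if k < l then a * f k else 0) = a * (\<Sum>k = 1..l - 1. (f k :: real))"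
proof -
  have "(\<Sum>k = 1..n. if k < l then a * f k else 0) = (\<Sum>k = 1..n. a * (if k < l then f k else 0))"
    by (intro sum.cong refl) auto
  also have "\<dots> = a * sum f ({1..n} \<inter> {k. k < l})"
    by (simp add: sum.inter_restrict sum_distrib_left)
  also have "{1..n} \<inter> {k. k < l} = {1..l - 1}" using assms by auto
  finally show ?thesis .
qed

lemma shift_sum:
  fixes g :: "nat \<Rightarrow> real"
  assumes "g (Suc 0) = 0"
  shows "(\<Sum>l = 1..n. g l) = (\<Sum>k = 1..n - 1. g (Suc k))"
proof (induction n)
  case 0 then show ?case by simp
next
  case (Suc n)
  show ?case
  proof (cases n)
    case 0 then show ?thesis using assms by simp
  next
    case (Suc n')
    then show ?thesis using Suc.IH by (simp add: sum.cl_ivl_Suc)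
  qed
qed

lemma key_identity:
  fixes G :: "nat \<Rightarrow> nat \<Rightarrow> real" and al be v :: "nat \<Rightarrow> real" and mu :: real
  defines "C \<equiv> \<lambda>k l. be l * G k (l - 1) + al l * G k l + be (Suc l) * G k (Suc l)"
  assumes Gsym: "\<And>k l. G k l = G l k"
    and Gkk: "\<And>k. 1 \<le> k \<Longrightarrow> k \<le> n \<Longrightarrow> G k k = 1"
    and Gk1: "\<And>k. 1 \<le> k \<Longrightarrow> k \<le> n \<Longrightarrow> G k (Suc k) = 0"
    and G0: "\<And>k. G k 0 = 0" and be1: "be (Suc 0) = 0"
    and EV: "\<And>p. 1 \<le> p \<Longrightarrow> p \<le> n \<Longrightarrow>
        mu * v p = be p * v (p - 1) + al p * v p + (if Suc p \<le> n then be (Suc p) * v (Suc p) else 0)"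
  shows "(\<Sum>k = 1..n. \<Sum>l = 1..n. if k < l then v k * v l * (C k l - C l k) else 0)
      = be (Suc n) * v n * (\<Sum>k = 1..n. v k * G k (Suc n))"
proof -
  define X where "X = (\<Sum>k = 1..n. \<Sum>l = 1..n. if k < l then v k * v l * C k l else 0)"
  define Y where "Y = (\<Sum>k = 1..n. \<Sum>l = 1..n. if k < l then v k * v l * C l k else 0)"
  have XY: "(\<Sum>k = 1..n. \<Sum>l = 1..n. if k < l then v k * v l * (C k l - C l k) else 0) = X - Y"
  proof -
    have e: "\<And>k l. (if k < l then v k * v l * (C k l - C l k) else 0) = (if k < l then v k * v l * C k l else 0) - (if k < l then v k * v l * C l k else 0)"
      by (simp add: right_diff_distrib)
    show ?thesis unfolding X_def Y_def by (simp only: e sum_subtractf)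
  qed
  define W where "W = (\<Sum>k = 1..n. \<Sum>p = 1..n. if k < p then v k * v p * G k p else 0)"
  have Xe: "X = mu * W + (\<Sum>k = 1..n. if k < n then v k * be (Suc k) * v (Suc k) else 0)
          + (\<Sum>k = 1..n. if k < n then v k * be (Suc n) * v n * G k (Suc n) else 0)"
  proof -
    have "X = (\<Sum>k = 1..n. v k * (\<Sum>l = Suc k..n. v l * C k l))"
      unfolding X_def
    proof (intro sum.cong refl)
      fix k
      have "(\<Sum>l = 1..n. if k < l then v k * v l * C k l else 0) = (\<Sum>l = 1..n. v k * (if k < l then v l * C k l else 0))"
        by (intro sum.cong refl) auto
      also have "\<dots> = v k * (\<Sum>l = Suc k..n. v l * C k l)"
        by (simp only: sum_distrib_left[symmetric] sum_if_less_right)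
      finally show "(\<Sum>l = 1..n. if k < l then v k * v l * C k l else 0) = v k * (\<Sum>l = Suc k..n. v l * C k l)" .
    qed
    also have "\<dots> = (\<Sum>k = 1..n. v k * (mu * (\<Sum>p = Suc k..n. v p * G k p)
        + (if k < n then be (Suc k) * v (Suc k) + be (Suc n) * v n * G k (Suc n) else 0)))"
    proof (intro sum.cong refl arg_cong2[where f="(*)"])
      fix k assume k: "k \<in> {1..n}"
      have "(\<Sum>l = Suc k..n. v l * C k l) = (\<Sum>p = Suc k..n. G k p * (be p * v (p - 1) + al p * v p
                     + (if Suc p \<le> n then be (Suc p) * v (Suc p) else 0)))
      + (if k < n then be (Suc k) * v (Suc k) + be (Suc n) * v n * G k (Suc n) else 0)"
        unfolding C_def using k by (intro X_inner Gkk Gk1) auto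
      also have "(\<Sum>p = Suc k..n. G k p * (be p * v (p - 1) + al p * v p
                     + (if Suc p \<le> n then be (Suc p) * v (Suc p) else 0)))
          = (\<Sum>p = Suc k..n. G k p * (mu * v p))"
        using k by (intro sum.cong refl) (simp add: EV)
      finally show "(\<Sum>l = Suc k..n. v l * C k l) = mu * (\<Sum>p = Suc k..n. v p * G k p)
        + (if k < n then be (Suc k) * v (Suc k) + be (Suc n) * v n * G k (Suc n) else 0)"
        by (simp add: sum_distrib_left algebra_simps)
    qed
    also have "\<dots> = mu * W + (\<Sum>k = 1..n. if k < n then v k * be (Suc k) * v (Suc k) else 0)
          + (\<Sum>k = 1..n. if k < n then v k * be (Suc n) * v n * G k (Suc n) else 0)"
    proof -
      have W': "W = (\<Sum>k = 1..n. v k * (\<Sum>p = Suc k..n. v p * G k p))"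
        unfolding W_def by (intro sum.cong refl) (simp only: mult.assoc sum_upper)
      have e: "\<And>k. v k * (mu * (\<Sum>p = Suc k..n. v p * G k p)
        + (if k < n then be (Suc k) * v (Suc k) + be (Suc n) * v n * G k (Suc n) else 0))
        = mu * (v k * (\<Sum>p = Suc k..n. v p * G k p)) + (if k < n then v k * be (Suc k) * v (Suc k) else 0)
          + (if k < n then v k * be (Suc n) * v n * G k (Suc n) else 0)"
        by (simp add: algebra_simps)
      show ?thesis unfolding W' e sum.distrib by (simp only: sum_distrib_left)
    qed
    finally show ?thesis .
  qed
  have Ye: "Y = mu * W + (\<Sum>l = 1..n. v l * be l * v (l - 1))"
  proof -
    have "Y = (\<Sum>l = 1..n. \<Sum>k = 1..n. if k < l then v l * (v k * C l k) else 0)"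
      unfolding Y_def by (subst sum.swap) (intro sum.cong refl, simp add: mult_ac)
    also have "\<dots> = (\<Sum>l = 1..n. v l * (\<Sum>k = 1..l - 1. v k * C l k))"
      by (intro sum.cong refl) (simp only: sum_lower atLeastAtMost_iff)
    also have "\<dots> = (\<Sum>l = 1..n. v l * (mu * (\<Sum>p = 1..l - 1. v p * G l p) + be l * v (l - 1)))"
    proof (intro sum.cong refl arg_cong2[where f="(*)"])
      fix l assume l: "l \<in> {1..n}"
      have "(\<Sum>k = 1..l - 1. v k * C l k) = (\<Sum>p = 1..l - 1. G l p * (be p * v (p - 1) + al p * v p
                     + (if Suc p \<le> l - 1 then be (Suc p) * v (Suc p) else 0)))
          + be (Suc (l - 1)) * v (l - 1) * G l (Suc (l - 1))"
        unfolding C_def by (rule Y_inner[where G=G and l=l and be=be and al=al and v=v and M="l - 1", OF G0[of l] be1])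
      also have "be (Suc (l - 1)) * v (l - 1) * G l (Suc (l - 1)) = be l * v (l - 1)"
        using l Gkk[of l] by simp
      also have "(\<Sum>p = 1..l - 1. G l p * (be p * v (p - 1) + al p * v p
                     + (if Suc p \<le> l - 1 then be (Suc p) * v (Suc p) else 0)))
          = (\<Sum>p = 1..l - 1. G l p * (mu * v p))"
      proof (intro sum.cong refl)
        fix p assume p: "p \<in> {1..l - 1}"
        show "G l p * (be p * v (p - 1) + al p * v p
                     + (if Suc p \<le> l - 1 then be (Suc p) * v (Suc p) else 0)) = G l p * (mu * v p)"
        proof (cases "Suc p \<le> l - 1")
          case True
          have pn: "p \<le> n" "Suc p \<le> n" using True p l by auto
          have "mu * v p = be p * v (p - 1) + al p * v p + be (Suc p) * v (Suc p)"
            using EV[of p] pn p by simp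
          then show ?thesis using True by simp
        next
          case False
          then have "Suc p = l" using p l by auto
          then have "G l p = 0" using Gk1[of p] Gsym[of l p] p l by auto
          then show ?thesis by simp
        qed
      qed
      finally show "(\<Sum>k = 1..l - 1. v k * C l k) = mu * (\<Sum>p = 1..l - 1. v p * G l p) + be l * v (l - 1)"
        by (simp add: sum_distrib_left algebra_simps)
    qed
    also have "\<dots> = mu * (\<Sum>l = 1..n. v l * (\<Sum>p = 1..l - 1. v p * G l p)) + (\<Sum>l = 1..n. v l * be l * v (l - 1))"
      by (simp only: distrib_left sum.distrib sum_distrib_left mult.assoc mult.left_commute[of _ mu])
    also have "(\<Sum>l = 1..n. v l * (\<Sum>p = 1..l - 1. v p * G l p)) = W"
    proof -
      have "(\<Sum>l = 1..n. v l * (\<Sum>p = 1..l - 1. v p * G l p)) = (\<Sum>l = 1..n. \<Sum>p = 1..n. if p < l then v l * (v p * G l p) else 0)"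
        by (intro sum.cong refl) (simp only: sum_lower atLeastAtMost_iff)
      also have "\<dots> = (\<Sum>p = 1..n. \<Sum>l = 1..n. if p < l then v l * (v p * G l p) else 0)"
        by (rule sum.swap)
      also have "\<dots> = W" unfolding W_def
        by (intro sum.cong refl) (simp add: Gsym mult_ac)
      finally show ?thesis .
    qed
    finally show ?thesis .
  qed
  have T1: "(\<Sum>k = 1..n. if k < n then v k * be (Suc k) * v (Suc k) else 0) = (\<Sum>l = 1..n. v l * be l * v (l - 1))"
  proof (cases "n = 0")
    case False
    have "(\<Sum>k = 1..n. if k < n then v k * be (Suc k) * v (Suc k) else 0)
        = (\<Sum>k = 1..n. if k < n then 1 * (v k * be (Suc k) * v (Suc k)) else 0)"
      by (intro sum.cong refl) simp
    also have "\<dots> = (\<Sum>k = 1..n - 1. v k * be (Suc k) * v (Suc k))"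
      using False by (subst sum_lower) auto
    also have "\<dots> = (\<Sum>l = 1..n. v l * be l * v (l - 1))"
      using be1 by (subst shift_sum[of "\<lambda>l. v l * be l * v (l - 1)"]) (simp_all add: mult_ac)
    finally show ?thesis .
  qed simp
  have T3: "(\<Sum>k = 1..n. if k < n then v k * be (Suc n) * v n * G k (Suc n) else 0)
      = be (Suc n) * v n * (\<Sum>k = 1..n. v k * G k (Suc n))"
  proof (cases "n = 0")
    case False
    have "(\<Sum>k = 1..n. if k < n then v k * be (Suc n) * v n * G k (Suc n) else 0)
        = (\<Sum>k = 1..n. if k < n then (be (Suc n) * v n) * (v k * G k (Suc n)) else 0)"
      by (intro sum.cong refl) (simp add: mult_ac)
    also have "\<dots> = (be (Suc n) * v n) * (\<Sum>k = 1..n - 1. v k * G k (Suc n))"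
      using False by (subst sum_lower) auto
    also have "(\<Sum>k = 1..n - 1. v k * G k (Suc n)) = (\<Sum>k = 1..n. v k * G k (Suc n))"
    proof -
      obtain n' where n': "n = Suc n'" using False by (cases n) auto
      have "G n (Suc n) = 0" using Gk1[of n] False by simp
      then show ?thesis unfolding n' by (simp add: sum.cl_ivl_Suc)
    qed
    finally show ?thesis .
  qed simp
  show ?thesis unfolding XY Xe Ye T1[symmetric] T3 by simp
qed


lemma expand_complete:
  fixes V :: "nat \<Rightarrow> nat \<Rightarrow> real" and y g :: "nat \<Rightarrow> real"
  assumes comp: "\<And>k k'. k \<in> {1..n} \<Longrightarrow> k' \<in> {1..n} \<Longrightarrow>
      (\<Sum>s = 1..n. V s k * V s k') = (if k = k' then 1 else 0)"
  shows "(\<Sum>k = 1..n. y k * g k) = (\<Sum>s = 1..n. (\<Sum>k = 1..n. V s k * y k) * (\<Sum>k = 1..n. V s k * g k))"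
proof -
  have "(\<Sum>s = 1..n. (\<Sum>k = 1..n. V s k * y k) * (\<Sum>k = 1..n. V s k * g k))
      = (\<Sum>s = 1..n. \<Sum>k = 1..n. \<Sum>k' = 1..n. (V s k * y k) * (V s k' * g k'))"
    by (simp only: sum_product)
  also have "\<dots> = (\<Sum>s = 1..n. \<Sum>k = 1..n. \<Sum>k' = 1..n. y k * g k' * (V s k * V s k'))"
    by (simp add: mult_ac)
  also have "\<dots> = (\<Sum>k = 1..n. \<Sum>s = 1..n. \<Sum>k' = 1..n. y k * g k' * (V s k * V s k'))"
    by (rule sum.swap)
  also have "\<dots> = (\<Sum>k = 1..n. \<Sum>k' = 1..n. \<Sum>s = 1..n. y k * g k' * (V s k * V s k'))"
    by (rule sum.cong[OF refl]) (rule sum.swap)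
  also have "\<dots> = (\<Sum>k = 1..n. \<Sum>k' = 1..n. y k * g k' * (if k = k' then 1 else 0))"
  proof (intro sum.cong refl)
    fix k k' assume kk: "k \<in> {1..n}" "k' \<in> {1..n}"
    have "(\<Sum>s = 1..n. y k * g k' * (V s k * V s k')) = y k * g k' * (\<Sum>s = 1..n. V s k * V s k')"
      by (simp add: sum_distrib_left)
    then show "(\<Sum>s = 1..n. y k * g k' * (V s k * V s k')) = y k * g k' * (if k = k' then 1 else 0)"
      using comp[OF kk] by simp
  qed
  also have "\<dots> = (\<Sum>k = 1..n. y k * g k)"
    by (intro sum.cong refl) (simp add: if_distrib sum.delta cong: if_cong)
  finally show ?thesis by simp
qed

lemma per_n:
  fixes V :: "nat \<Rightarrow> nat \<Rightarrow> real" and y g mus S :: "nat \<Rightarrow> real" and mui be' :: real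
  assumes comp: "\<And>k k'. k \<in> {1..n} \<Longrightarrow> k' \<in> {1..n} \<Longrightarrow>
      (\<Sum>s = 1..n. V s k * V s k') = (if k = k' then 1 else 0)"
    and keyS: "\<And>s. s \<in> {1..n} \<Longrightarrow> be' * V s n * (\<Sum>k = 1..n. V s k * g k) = S s"
    and ceq: "\<And>s. s \<in> {1..n} \<Longrightarrow> (mui - mus s) * (\<Sum>k = 1..n. V s k * y k) = be' * V s n * yn"
    and dnz: "\<And>s. s \<in> {1..n} \<Longrightarrow> mui - mus s \<noteq> 0"
  shows "yn * (\<Sum>k = 1..n. y k * g k) = (\<Sum>s = 1..n. yn^2 * S s / (mui - mus s))"
proof -
  have "yn * (\<Sum>k = 1..n. y k * g k) = (\<Sum>s = 1..n. yn * ((\<Sum>k = 1..n. V s k * y k) * (\<Sum>k = 1..n. V s k * g k)))"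
  proof -
    have ec: "(\<Sum>k = 1..n. y k * g k) = (\<Sum>s = 1..n. (\<Sum>k = 1..n. V s k * y k) * (\<Sum>k = 1..n. V s k * g k))"
      by (rule expand_complete) (rule comp)
    show ?thesis unfolding ec by (rule sum_distrib_left)
  qed
  also have "\<dots> = (\<Sum>s = 1..n. yn^2 * S s / (mui - mus s))"
  proof (intro sum.cong refl)
    fix s assume s: "s \<in> {1..n}"
    have c: "(\<Sum>k = 1..n. V s k * y k) = be' * V s n * yn / (mui - mus s)"
      using ceq[OF s] dnz[OF s] by (simp add: field_simps)
    show "yn * ((\<Sum>k = 1..n. V s k * y k) * (\<Sum>k = 1..n. V s k * g k)) = yn^2 * S s / (mui - mus s)"
      unfolding c keyS[OF s, symmetric] by (simp add: power2_eq_square)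
  qed
  finally show ?thesis .
qed


lemma final_abstract:
  fixes j :: nat and y :: "nat \<Rightarrow> real" and S d :: "nat \<Rightarrow> nat \<Rightarrow> real" and yRy om B c :: real
  assumes yRy_eq: "yRy = (\<Sum>n = 1..j - 1. \<Sum>s = 1..n. (y (Suc n))\<^sup>2 * S n s / d n s)"
    and Sb: "\<And>n s. 1 \<le> s \<Longrightarrow> s \<le> n \<Longrightarrow> n < j \<Longrightarrow> \<bar>S n s\<bar> \<le> om * n / 2"
    and ysum: "(\<Sum>n = 1..j - 1. (y (Suc n))\<^sup>2) \<le> 1"
    and dB: "\<And>n s. 1 \<le> s \<Longrightarrow> s \<le> n \<Longrightarrow> n < j \<Longrightarrow> \<bar>d n s\<bar> > B"
    and Bpos: "B > 0" and om0: "om \<ge> 0"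
    and om: "om * (real j)\<^sup>2 / 2 \<le> c * B * \<bar>yRy\<bar>" and c1: "c < 1"
  shows "yRy = 0"
proof -
  define K where "K = om * (real j)\<^sup>2 / (2 * B)"
  have K0: "K \<ge> 0" unfolding K_def using om0 Bpos by simp
  have "\<bar>yRy\<bar> \<le> (\<Sum>n = 1..j - 1. \<bar>\<Sum>s = 1..n. (y (Suc n))\<^sup>2 * S n s / d n s\<bar>)"
    unfolding yRy_eq by (rule sum_abs)
  also have "\<dots> \<le> (\<Sum>n = 1..j - 1. (y (Suc n))\<^sup>2 * K)"
  proof (intro sum_mono)
    fix n assume n: "n \<in> {1..j - 1}"
    have "\<bar>\<Sum>s = 1..n. (y (Suc n))\<^sup>2 * S n s / d n s\<bar> \<le> (\<Sum>s = 1..n. \<bar>(y (Suc n))\<^sup>2 * S n s / d n s\<bar>)"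
      by (rule sum_abs)
    also have "\<dots> \<le> (\<Sum>s = 1..n. (y (Suc n))\<^sup>2 * (om * n / (2 * B)))"
    proof (intro sum_mono)
      fix s assume s: "s \<in> {1..n}"
      have nj: "n < j" using n by auto
      have dpos: "\<bar>d n s\<bar> > B" using dB[of s n] s nj by auto
      have "\<bar>S n s\<bar> / \<bar>d n s\<bar> \<le> \<bar>S n s\<bar> / B"
        using dpos Bpos by (intro divide_left_mono) auto
      also have "\<dots> \<le> (om * n / 2) / B"
        using Sb[of s n] s nj Bpos by (intro divide_right_mono) auto
      finally have "\<bar>S n s\<bar> / \<bar>d n s\<bar> \<le> om * n / (2 * B)" by simp
      then have "(y (Suc n))\<^sup>2 * (\<bar>S n s\<bar> / \<bar>d n s\<bar>) \<le> (y (Suc n))\<^sup>2 * (om * n / (2 * B))"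
        by (intro mult_left_mono) auto
      then show "\<bar>(y (Suc n))\<^sup>2 * S n s / d n s\<bar> \<le> (y (Suc n))\<^sup>2 * (om * n / (2 * B))"
        by (simp add: abs_mult abs_divide)
    qed
    also have "\<dots> = (y (Suc n))\<^sup>2 * (om * n * n / (2 * B))" by simp
    also have "\<dots> \<le> (y (Suc n))\<^sup>2 * K"
    proof (intro mult_left_mono)
      have "real n * real n \<le> real j * real j" using n by (intro mult_mono) auto
      then have "om * (real n * real n) \<le> om * (real j * real j)" using om0 by (intro mult_left_mono)
      then show "om * n * n / (2 * B) \<le> K" unfolding K_def using Bpos
        by (simp add: divide_right_mono power2_eq_square mult.assoc)
    qed simp
    finally show "\<bar>\<Sum>s = 1..n. (y (Suc n))\<^sup>2 * S n s / d n s\<bar> \<le> (y (Suc n))\<^sup>2 * K" .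
  qed
  also have "\<dots> = K * (\<Sum>n = 1..j - 1. (y (Suc n))\<^sup>2)" by (simp add: sum_distrib_left mult.commute)
  also have "\<dots> \<le> K * 1" using ysum K0 by (intro mult_left_mono)
  also have "\<dots> \<le> c * \<bar>yRy\<bar>" unfolding K_def using om Bpos by (simp add: field_simps)
  finally have "\<bar>yRy\<bar> \<le> c * \<bar>yRy\<bar>" .
  then have "(1 - c) * \<bar>yRy\<bar> \<le> 0" by (simp add: algebra_simps)
  then show ?thesis using c1 by (simp add: mult_le_0_iff)
qed


lemma S_bound:
  fixes v :: "nat \<Rightarrow> real" and w :: "nat \<Rightarrow> nat \<Rightarrow> real" and om :: real
  assumes vn: "(\<Sum>k = 1..n. (v k)\<^sup>2) = 1"
    and wb: "\<And>k l. k \<in> {1..n} \<Longrightarrow> l \<in> {1..n} \<Longrightarrow> \<bar>w k l\<bar> \<le> om"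
    and om0: "om \<ge> 0"
  shows "\<bar>\<Sum>k = 1..n. \<Sum>l = 1..n. if k < l then v k * v l * w k l else 0\<bar> \<le> om * n / 2"
proof -
  have "\<bar>\<Sum>k = 1..n. \<Sum>l = 1..n. if k < l then v k * v l * w k l else 0\<bar>
      \<le> (\<Sum>k = 1..n. \<bar>\<Sum>l = 1..n. if k < l then v k * v l * w k l else 0\<bar>)" by (rule sum_abs)
  also have "\<dots> \<le> (\<Sum>k = 1..n. \<Sum>l = 1..n. \<bar>if k < l then v k * v l * w k l else 0\<bar>)"
    by (intro sum_mono sum_abs)
  also have "\<dots> \<le> (\<Sum>k = 1..n. \<Sum>l = 1..n. om / 2 * ((if k < l then (v k)\<^sup>2 else 0) + (if k < l then (v l)\<^sup>2 else 0)))"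
  proof (intro sum_mono)
    fix k l assume kl: "k \<in> {1..n}" "l \<in> {1..n}"
    show "\<bar>if k < l then v k * v l * w k l else 0\<bar> \<le> om / 2 * ((if k < l then (v k)\<^sup>2 else 0) + (if k < l then (v l)\<^sup>2 else 0))"
    proof (cases "k < l")
      case True
      have a: "\<bar>v k * v l\<bar> \<le> ((v k)\<^sup>2 + (v l)\<^sup>2) / 2"
      proof -
        have "0 \<le> (\<bar>v k\<bar> - \<bar>v l\<bar>)\<^sup>2" by simp
        then have "2 * (\<bar>v k\<bar> * \<bar>v l\<bar>) \<le> \<bar>v k\<bar>\<^sup>2 + \<bar>v l\<bar>\<^sup>2"
          unfolding power2_diff by linarith
        then show ?thesis by (simp add: abs_mult)
      qed
      have "\<bar>v k * v l * w k l\<bar> = \<bar>v k * v l\<bar> * \<bar>w k l\<bar>" by (simp add: abs_mult)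
      also have "\<dots> \<le> ((v k)\<^sup>2 + (v l)\<^sup>2) / 2 * om"
        using a wb[OF kl] by (intro mult_mono) auto
      finally show ?thesis using True by (simp add: algebra_simps)
    qed simp
  qed
  also have "\<dots> = om / 2 * ((\<Sum>k = 1..n. \<Sum>l = 1..n. if k < l then (v k)\<^sup>2 else 0)
                 + (\<Sum>k = 1..n. \<Sum>l = 1..n. if k < l then (v l)\<^sup>2 else 0))"
    by (simp only: sum.distrib distrib_left sum_distrib_left)
  also have "\<dots> \<le> om / 2 * n"
  proof (intro mult_left_mono)
    have "(\<Sum>k = 1..n. \<Sum>l = 1..n. if k < l then (v l)\<^sup>2 else 0)
      = (\<Sum>k = 1..n. \<Sum>l = 1..n. if l < k then (v k)\<^sup>2 else 0)"
      by (rule sum.swap)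
    moreover have "(\<Sum>k = 1..n. \<Sum>l = 1..n. if k < l then (v k)\<^sup>2 else 0)
                 + (\<Sum>k = 1..n. \<Sum>l = 1..n. if l < k then (v k)\<^sup>2 else 0)
      \<le> (\<Sum>k = 1..n. \<Sum>l = 1..n. (v k)\<^sup>2)"
      unfolding sum.distrib[symmetric] by (intro sum_mono) auto
    moreover have "(\<Sum>k = 1..n. \<Sum>l = 1..n. (v k)\<^sup>2) = real n"
      using vn by (simp add: sum_distrib_left[symmetric])
    ultimately show "(\<Sum>k = 1..n. \<Sum>l = 1..n. if k < l then (v k)\<^sup>2 else 0)
                 + (\<Sum>k = 1..n. \<Sum>l = 1..n. if k < l then (v l)\<^sup>2 else 0) \<le> real n" by linarith
  qed (use om0 in simp)
  finally show ?thesis by simp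
qed


lemma swap_T:
  fixes T :: "nat \<Rightarrow> nat \<Rightarrow> real" and v y :: "nat \<Rightarrow> real"
  assumes sym: "\<And>k l. T k l = T l k"
    and ev: "\<And>l. l \<in> {1..n} \<Longrightarrow> (\<Sum>k = 1..n. T l k * v k) = mu * v l"
  shows "(\<Sum>k = 1..n. v k * (\<Sum>l = 1..n. T k l * y l)) = mu * (\<Sum>k = 1..n. v k * y k)"
proof -
  have "(\<Sum>k = 1..n. v k * (\<Sum>l = 1..n. T k l * y l)) = (\<Sum>k = 1..n. \<Sum>l = 1..n. v k * (T k l * y l))"
    by (simp add: sum_distrib_left)
  also have "\<dots> = (\<Sum>l = 1..n. \<Sum>k = 1..n. v k * (T k l * y l))" by (rule sum.swap)
  also have "\<dots> = (\<Sum>l = 1..n. y l * (\<Sum>k = 1..n. T l k * v k))"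
    by (intro sum.cong refl) (simp add: sum_distrib_left sym mult_ac)
  also have "\<dots> = (\<Sum>l = 1..n. y l * (mu * v l))"
    by (intro sum.cong refl) (subst ev, assumption, rule refl)
  also have "\<dots> = mu * (\<Sum>k = 1..n. v k * y k)" by (simp add: sum_distrib_left mult_ac)
  finally show ?thesis .
qed


lemma yRy_formula:
  fixes y :: "nat \<Rightarrow> real" and G :: "nat \<Rightarrow> nat \<Rightarrow> real"
  shows "(\<Sum>k = 1..j. \<Sum>l = 1..j. y k * (if k < l then G k l else 0) * y l)
     = (\<Sum>n = 1..j - 1. y (Suc n) * (\<Sum>k = 1..n. y k * G k (Suc n)))"
proof -
  have "(\<Sum>k = 1..j. \<Sum>l = 1..j. y k * (if k < l then G k l else 0) * y l)
      = (\<Sum>l = 1..j. \<Sum>k = 1..j. if k < l then y l * (y k * G k l) else 0)"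
    by (subst sum.swap) (intro sum.cong refl, simp add: mult_ac)
  also have "\<dots> = (\<Sum>l = 1..j. y l * (\<Sum>k = 1..l - 1. y k * G k l))"
    by (intro sum.cong refl) (simp only: sum_lower atLeastAtMost_iff)
  also have "\<dots> = (\<Sum>n = 1..j - 1. y (Suc n) * (\<Sum>k = 1..n. y k * G k (Suc n)))"
    by (subst shift_sum) simp_all
  finally show ?thesis .
qed

lemma ysum_le:
  fixes y :: "nat \<Rightarrow> real"
  shows "(\<Sum>n = 1..j - 1. (y (Suc n))\<^sup>2) \<le> (\<Sum>k = 1..j. (y k)\<^sup>2)"
proof -
  have "(\<Sum>n = 1..j - 1. (y (Suc n))\<^sup>2) = (\<Sum>k = Suc 1..Suc (j - 1). (y k)\<^sup>2)"
    by (rule sum.shift_bounds_cl_Suc_ivl[symmetric])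
  also have "\<dots> \<le> (\<Sum>k = 1..j. (y k)\<^sup>2)"
    by (intro sum_mono2) auto
  finally show ?thesis .
qed


lemma sum_1n_shift: "(\<Sum>k = 1..n. f k) = (\<Sum>i \<in> {0..<n}. f (Suc i))"
  by (simp add: atLeast0LessThan sum.atLeast1_atMost_eq)

lemma complete_from_orth:
  fixes Y :: "nat \<Rightarrow> nat \<Rightarrow> real"
  assumes orth: "\<And>r r'. r \<in> {1..n} \<Longrightarrow> r' \<in> {1..n} \<Longrightarrow>
     (\<Sum>k = 1..n. Y r k * Y r' k) = (if r = r' then 1 else 0)"
    and k: "k \<in> {1..n}" "k' \<in> {1..n}"
  shows "(\<Sum>r = 1..n. Y r k * Y r k') = (if k = k' then 1 else 0)"
proof -
  define M where "M = mat n n (\<lambda>(r, c). Y (Suc r) (Suc c))"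
  have Mc: "M \<in> carrier_mat n n" "transpose_mat M \<in> carrier_mat n n" unfolding M_def by auto
  have "M * transpose_mat M = 1\<^sub>m n"
  proof (rule eq_matI)
    fix a c assume ac: "a < dim_row (1\<^sub>m n)" "c < dim_col (1\<^sub>m n)"
    then have "(M * transpose_mat M) $$ (a, c) = (\<Sum>i \<in> {0..<n}. Y (Suc a) (Suc i) * Y (Suc c) (Suc i))"
      unfolding M_def by (simp add: scalar_prod_def)
    also have "\<dots> = (\<Sum>i = 1..n. Y (Suc a) i * Y (Suc c) i)" by (simp only: sum_1n_shift)
    also have "\<dots> = (if a = c then 1 else 0)" using orth[of "Suc a" "Suc c"] ac by simp
    finally show "(M * transpose_mat M) $$ (a, c) = 1\<^sub>m n $$ (a, c)" using ac by simp
  qed (simp_all add: M_def)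
  then have MT: "transpose_mat M * M = 1\<^sub>m n" using mat_mult_left_right_inverse[OF Mc(1) Mc(2)] by simp
  obtain a where a0: "k = Suc a" using k by (cases k) auto
  obtain c where c0: "k' = Suc c" using k by (cases k') auto
  have a: "k = Suc a" "a < n" using a0 k by auto
  have c: "k' = Suc c" "c < n" using c0 k by auto
  have "(transpose_mat M * M) $$ (a, c) = (\<Sum>i \<in> {0..<n}. Y (Suc i) (Suc a) * Y (Suc i) (Suc c))"
    using a c unfolding M_def by (simp add: scalar_prod_def)
  also have "\<dots> = (\<Sum>r = 1..n. Y r k * Y r k')" using a c by (simp only: sum_1n_shift)
  finally show ?thesis using MT a c by simp
qed





theorem lemmaF3:
  fixes g :: "'x::euclidean_space \<Rightarrow> 'y::euclidean_space \<Rightarrow> real"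
    and gx :: "'x \<Rightarrow> 'y \<Rightarrow> 'x" and gy :: "'x \<Rightarrow> 'y \<Rightarrow> 'y"
    and Dxx :: "'x \<Rightarrow> 'y \<Rightarrow> ('x \<Rightarrow>\<^sub>L 'x)" and Dxy :: "'x \<Rightarrow> 'y \<Rightarrow> ('y \<Rightarrow>\<^sub>L 'x)"
    and Dyx :: "'x \<Rightarrow> 'y \<Rightarrow> ('x \<Rightarrow>\<^sub>L 'y)" and Dyy :: "'x \<Rightarrow> 'y \<Rightarrow> ('y \<Rightarrow>\<^sub>L 'y)"
    and Lgx Lgy Lgxy Lgyy mug :: real
    and m j i :: nat
    and xs :: "nat \<Rightarrow> 'x" and ys :: "nat \<Rightarrow> 'y" and b :: 'y
    and mu :: "nat \<Rightarrow> nat \<Rightarrow> real" and Y :: "nat \<Rightarrow> nat \<Rightarrow> nat \<Rightarrow> real"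
  defines "A \<equiv> (\<lambda>k. blinfun_apply (Dyy (xs k) (ys k)))"
  \<comment> \<open>g is twice continuously differentiable (gradients gx, gy; Hessian blocks D..)\<close>
  assumes g_diff: "\<And>x y. ((\<lambda>p. g (fst p) (snd p)) has_derivative
                      (\<lambda>h. inner (gx x y) (fst h) + inner (gy x y) (snd h))) (at (x, y))"
    and gx_diff: "\<And>x y. ((\<lambda>p. gx (fst p) (snd p)) has_derivative
                      (\<lambda>h. Dxx x y (fst h) + Dxy x y (snd h))) (at (x, y))"
    and gy_diff: "\<And>x y. ((\<lambda>p. gy (fst p) (snd p)) has_derivative
                      (\<lambda>h. Dyx x y (fst h) + Dyy x y (snd h))) (at (x, y))"
    and Dxx_cont: "continuous_on UNIV (\<lambda>p. Dxx (fst p) (snd p))"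
    and Dxy_cont: "continuous_on UNIV (\<lambda>p. Dxy (fst p) (snd p))"
    and Dyx_cont: "continuous_on UNIV (\<lambda>p. Dyx (fst p) (snd p))"
    and Dyy_cont: "continuous_on UNIV (\<lambda>p. Dyy (fst p) (snd p))"
  \<comment> \<open>(A2)\<close>
    and A2_gx: "\<And>x y x' y'. norm (gx x y - gx x' y') \<le> Lgx * norm ((x, y) - (x', y'))"
    and A2_gy: "\<And>x y x' y'. norm (gy x y - gy x' y') \<le> Lgy * norm ((x, y) - (x', y'))"
    and A2_gxy: "\<And>x y x' y'. norm (Dxy x y - Dxy x' y') \<le> Lgxy * norm ((x, y) - (x', y'))"
    and A2_gyy: "\<And>x y x' y'. norm (Dyy x y - Dyy x' y') \<le> Lgyy * norm ((x, y) - (x', y'))"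
  \<comment> \<open>(A3)\<close>
    and mug_pos: "mug > 0"
    and A3: "\<And>x. convex_on UNIV (\<lambda>y. g x y - mug / 2 * (norm y)\<^sup>2)"
  \<comment> \<open>dynamic Lanczos setting\<close>
    and b_nz: "b \<noteq> 0"
    and beta_nz: "\<And>k. 1 \<le> k \<Longrightarrow> k < m \<Longrightarrow> lz_beta A b (Suc k) \<noteq> 0"
    and j_bounds: "2 \<le> j" "j \<le> m"
  \<comment> \<open>for 1 \<le> n \<le> j: T_n Y^(n) = Y^(n) diag(mu^(n)), Y^(n) orthogonal, mu^(n) strictly
      decreasing (T_n has distinct eigenvalues); Y n r k is the k-th entry of y_r^(n)\<close>
    and eig: "\<And>n r k. 1 \<le> n \<Longrightarrow> n \<le> j \<Longrightarrow> r \<in> {1..n} \<Longrightarrow> k \<in> {1..n} \<Longrightarrow>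
              (\<Sum>l = 1..n. lz_T A b k l * Y n r l) = mu n r * Y n r k"
    and orth: "\<And>n r r'. 1 \<le> n \<Longrightarrow> n \<le> j \<Longrightarrow> r \<in> {1..n} \<Longrightarrow> r' \<in> {1..n} \<Longrightarrow>
              (\<Sum>k = 1..n. Y n r k * Y n r' k) = (if r = r' then 1 else 0)"
    and decr: "\<And>n r. 1 \<le> n \<Longrightarrow> n \<le> j \<Longrightarrow> 1 \<le> r \<Longrightarrow> r < n \<Longrightarrow> mu n r > mu n (Suc r)"
    and i_bounds: "1 \<le> i" "i \<le> j"
    and yRy_nz: "(\<Sum>k = 1..j. \<Sum>l = 1..j. Y j i k * lz_R A b k l * Y j i l) \<noteq> 0"
  shows "\<exists>s n. 1 \<le> s \<and> s \<le> n \<and> n < j \<and>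
           \<bar>mu j i - mu n s\<bar> \<le>
             2 * real j ^ 2 * Lgyy * eps_j g Lgx mug xs ys j /
             (sqrt 3 * \<bar>\<Sum>k = 1..j. \<Sum>l = 1..j. Y j i k * lz_R A b k l * Y j i l\<bar>)"
proof (rule ccontr)
  assume neg: "\<not> ?thesis"
  define q where "q = lz_q A b"
  define be where "be = lz_beta A b"
  define al where "al = lz_alpha A b"
  define G where "G k l = inner (q k) (q l)" for k l
  define y where "y = Y j i"
  define C where "C = (\<lambda>k l. be l * G k (l - 1) + al l * G k l + be (Suc l) * G k (Suc l))"
  define yRy where "yRy = (\<Sum>k = 1..j. \<Sum>l = 1..j. Y j i k * lz_R A b k l * Y j i l)"
  define eps where "eps = eps_j g Lgx mug xs ys j"
  define B where "B = 2 * real j ^ 2 * Lgyy * eps / (sqrt 3 * \<bar>yRy\<bar>)"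
  have yRy_nz': "yRy \<noteq> 0" using yRy_nz unfolding yRy_def .
  have L0: "Lgyy \<ge> 0" by (rule lip_nonneg[OF A2_gyy])
  have Lx0: "Lgx \<ge> 0" by (rule lip_nonneg[OF A2_gx])
  have eps0: "eps \<ge> 0"
  proof -
    have "eps_st g Lgx mug xs ys 1 1 \<le> eps" unfolding eps_def using j_bounds by (intro eps_j_ge) auto
    moreover have "eps_st g Lgx mug xs ys 1 1 \<ge> 0" using Lx0 mug_pos by (rule eps_st_nonneg)
    ultimately show ?thesis by linarith
  qed
  have B0: "B \<ge> 0" unfolding B_def using L0 eps0 by simp
  have dB: "\<bar>mu j i - mu n s\<bar> > B" if "1 \<le> s" "s \<le> n" "n < j" for n s
    using neg that unfolding B_def yRy_def eps_def by force
  have unit: "norm (q k) = 1" if "1 \<le> k" "k \<le> j" for k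
    unfolding q_def using b_nz beta_nz that j_bounds by (intro lz_unit[where m=m]) auto
  have Gkk: "G k k = 1" if "1 \<le> k" "k \<le> j" for k
    using unit[OF that] unfolding G_def by (simp add: power2_norm_eq_inner[symmetric])
  have Gk1: "G k (Suc k) = 0" if "1 \<le> k" "k \<le> j" for k
    unfolding G_def q_def using unit[OF that] that by (intro lz_orth_next) (auto simp: q_def)
  have G0: "G k 0 = 0" for k unfolding G_def q_def by (simp add: lz_q0)
  have be1: "be (Suc 0) = 0" unfolding be_def by (rule lz_beta1)
  have Gsym: "G k l = G l k" for k l unfolding G_def by (rule inner_commute)
  have Cform: "inner (q k) (A l (q l)) = C k l" if "1 \<le> l" for k l
    unfolding C_def q_def be_def al_def G_def
    using lz_rec[OF that, of A b] by (simp add: inner_add_right)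
  have Asym: "inner (A k u) v = inner u (A k v)" for k u v
    unfolding A_def by (rule Dyy_sym[OF g_diff gy_diff Dyy_cont])
  have wb: "\<bar>C k l - C l k\<bar> \<le> 2 * Lgyy * eps" if "k \<in> {1..j}" "l \<in> {1..j}" for k l
  proof -
    have "C k l - C l k = inner (q k) (A l (q l)) - inner (q l) (A k (q k))"
      using that by (simp add: Cform)
    also have "inner (q l) (A k (q k)) = inner (q k) (A k (q l))"
      using Asym[of k "q l" "q k"] by (simp add: inner_commute)
    also have "inner (q k) (A l (q l)) - inner (q k) (A k (q l))
        = inner (blinfun_apply (Dyy (xs l) (ys l) - Dyy (xs k) (ys k)) (q l)) (q k)"
      unfolding A_def by (simp add: blinfun.diff_left inner_diff_right inner_commute)
    finally have "\<bar>C k l - C l k\<bar> \<le> norm (Dyy (xs l) (ys l) - Dyy (xs k) (ys k)) * norm (q l) * norm (q k)"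
      using blinfun_inner_bound by metis
    also have "\<dots> = norm (Dyy (xs l) (ys l) - Dyy (xs k) (ys k))" using unit that by simp
    also have "\<dots> \<le> 2 * Lgyy * eps" unfolding eps_def
      by (rule Dyy_diff_bound[OF g_diff A2_gx A2_gyy mug_pos A3]) (use that in auto)
    finally show ?thesis .
  qed
  have EVn: "mu n s * Y n s p = be p * Y n s (p - 1) + al p * Y n s p
      + (if Suc p \<le> n then be (Suc p) * Y n s (Suc p) else 0)"
    if ns: "1 \<le> n" "n \<le> j" "s \<in> {1..n}" and p: "1 \<le> p" "p \<le> n" for n s p
  proof -
    have "(\<Sum>l = 1..n. lz_T A b p l * Y n s l) = mu n s * Y n s p" using eig[of n s p] ns p by auto
    then show ?thesis using T_row[of p n A b "Y n s"] p unfolding be_def al_def by simp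
  qed
  have keyS: "be (Suc n) * Y n s n * (\<Sum>k = 1..n. Y n s k * G k (Suc n))
      = (\<Sum>k = 1..n. \<Sum>l = 1..n. if k < l then Y n s k * Y n s l * (C k l - C l k) else 0)"
    if ns: "1 \<le> n" "n < j" "s \<in> {1..n}" for n s
  proof -
    have "(\<Sum>k = 1..n. \<Sum>l = 1..n. if k < l then Y n s k * Y n s l * (C k l - C l k) else 0)
        = be (Suc n) * Y n s n * (\<Sum>k = 1..n. Y n s k * G k (Suc n))"
      unfolding C_def
    proof (rule key_identity)
      show "\<And>k l. G k l = G l k" by (rule Gsym)
      show "\<And>k. 1 \<le> k \<Longrightarrow> k \<le> n \<Longrightarrow> G k k = 1" using Gkk ns by auto
      show "\<And>k. 1 \<le> k \<Longrightarrow> k \<le> n \<Longrightarrow> G k (Suc k) = 0" using Gk1 ns by auto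
      show "\<And>k. G k 0 = 0" by (rule G0)
      show "be (Suc 0) = 0" by (rule be1)
      show "\<And>p. 1 \<le> p \<Longrightarrow> p \<le> n \<Longrightarrow> mu n s * Y n s p = be p * Y n s (p - 1) + al p * Y n s p
          + (if Suc p \<le> n then be (Suc p) * Y n s (Suc p) else 0)"
        using EVn ns by auto
    qed
    then show ?thesis by simp
  qed
  have ceq: "(mu j i - mu n s) * (\<Sum>k = 1..n. Y n s k * y k) = be (Suc n) * Y n s n * y (Suc n)"
    if ns: "1 \<le> n" "n < j" "s \<in> {1..n}" for n s
  proof -
    have row: "mu j i * y k = (\<Sum>l = 1..n. lz_T A b k l * y l) + (if k = n then be (Suc n) * y (Suc n) else 0)"
      if k: "k \<in> {1..n}" for k
    proof -
      have "mu j i * y k = (\<Sum>l = 1..j. lz_T A b k l * y l)"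
        using eig[of j i k] k ns j_bounds i_bounds unfolding y_def by auto
      also have "\<dots> = be k * y (k - 1) + al k * y k + be (Suc k) * y (Suc k)"
        using T_row[of k j A b y] k ns unfolding be_def al_def by auto
      also have "(\<Sum>l = 1..n. lz_T A b k l * y l) = be k * y (k - 1) + al k * y k
          + (if Suc k \<le> n then be (Suc k) * y (Suc k) else 0)"
        using T_row[of k n A b y] k unfolding be_def al_def by auto
      ultimately show ?thesis using k by (cases "k = n") auto
    qed
    have "mu j i * (\<Sum>k = 1..n. Y n s k * y k) = (\<Sum>k = 1..n. Y n s k * (mu j i * y k))"
      by (simp add: sum_distrib_left mult_ac)
    also have "\<dots> = (\<Sum>k = 1..n. Y n s k * (\<Sum>l = 1..n. lz_T A b k l * y l))
        + (\<Sum>k = 1..n. if k = n then Y n s k * (be (Suc n) * y (Suc n)) else 0)"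
    proof -
      have "(\<Sum>k = 1..n. Y n s k * (mu j i * y k)) = (\<Sum>k = 1..n. Y n s k * (\<Sum>l = 1..n. lz_T A b k l * y l)
          + (if k = n then Y n s k * (be (Suc n) * y (Suc n)) else 0))"
      proof (intro sum.cong refl)
        fix k assume k: "k \<in> {1..n}"
        show "Y n s k * (mu j i * y k) = Y n s k * (\<Sum>l = 1..n. lz_T A b k l * y l)
          + (if k = n then Y n s k * (be (Suc n) * y (Suc n)) else 0)"
          unfolding row[OF k] by (simp add: distrib_left)
      qed
      then show ?thesis by (simp only: sum.distrib)
    qed
    also have "(\<Sum>k = 1..n. if k = n then Y n s k * (be (Suc n) * y (Suc n)) else 0)
        = Y n s n * (be (Suc n) * y (Suc n))"
      using ns by (simp add: sum.delta)
    also have "(\<Sum>k = 1..n. Y n s k * (\<Sum>l = 1..n. lz_T A b k l * y l)) = mu n s * (\<Sum>k = 1..n. Y n s k * y k)"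
    proof (rule swap_T)
      show "\<And>k l. lz_T A b k l = lz_T A b l k" by (rule lz_T_sym)
      show "\<And>l. l \<in> {1..n} \<Longrightarrow> (\<Sum>k = 1..n. lz_T A b l k * Y n s k) = mu n s * Y n s l"
        using eig ns by auto
    qed
    finally show ?thesis by (simp add: algebra_simps)
  qed
  have comp: "(\<Sum>s = 1..n. Y n s k * Y n s k') = (if k = k' then 1 else 0)"
    if "1 \<le> n" "n \<le> j" "k \<in> {1..n}" "k' \<in> {1..n}" for n k k'
    by (rule complete_from_orth[of n "Y n"]) (use orth that in auto)
  define S where "S n s = (\<Sum>k = 1..n. \<Sum>l = 1..n. if k < l then Y n s k * Y n s l * (C k l - C l k) else 0)" for n s
  define d where "d n s = mu j i - mu n s" for n s
  have dnz: "d n s \<noteq> 0" if "1 \<le> s" "s \<le> n" "n < j" for n s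
    using dB[OF that] B0 unfolding d_def by auto
  have yRy_eq: "yRy = (\<Sum>n = 1..j - 1. \<Sum>s = 1..n. (y (Suc n))\<^sup>2 * S n s / d n s)"
  proof -
    have "yRy = (\<Sum>k = 1..j. \<Sum>l = 1..j. y k * (if k < l then G k l else 0) * y l)"
      unfolding yRy_def y_def lz_R_def G_def q_def by simp
    also have "\<dots> = (\<Sum>n = 1..j - 1. y (Suc n) * (\<Sum>k = 1..n. y k * G k (Suc n)))"
      by (rule yRy_formula)
    also have "\<dots> = (\<Sum>n = 1..j - 1. \<Sum>s = 1..n. (y (Suc n))\<^sup>2 * S n s / d n s)"
    proof (intro sum.cong refl)
      fix n assume n: "n \<in> {1..j - 1}"
      have n1: "1 \<le> n" "n < j" using n by auto
      show "y (Suc n) * (\<Sum>k = 1..n. y k * G k (Suc n)) = (\<Sum>s = 1..n. (y (Suc n))\<^sup>2 * S n s / d n s)"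
        unfolding d_def
      proof (rule per_n[where V="Y n" and be'="be (Suc n)"])
        show "\<And>k k'. k \<in> {1..n} \<Longrightarrow> k' \<in> {1..n} \<Longrightarrow> (\<Sum>s = 1..n. Y n s k * Y n s k') = (if k = k' then 1 else 0)"
          using comp n1 by auto
        show "\<And>s. s \<in> {1..n} \<Longrightarrow> be (Suc n) * Y n s n * (\<Sum>k = 1..n. Y n s k * G k (Suc n)) = S n s"
          unfolding S_def using keyS n1 by auto
        show "\<And>s. s \<in> {1..n} \<Longrightarrow> (mu j i - mu n s) * (\<Sum>k = 1..n. Y n s k * y k) = be (Suc n) * Y n s n * y (Suc n)"
          using ceq n1 by auto
        show "\<And>s. s \<in> {1..n} \<Longrightarrow> mu j i - mu n s \<noteq> 0"
          using dnz n1 unfolding d_def by auto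
      qed
    qed
    finally show ?thesis .
  qed
  have Sb: "\<bar>S n s\<bar> \<le> (2 * Lgyy * eps) * n / 2" if "1 \<le> s" "s \<le> n" "n < j" for n s
    unfolding S_def
  proof (rule S_bound)
    show "(\<Sum>k = 1..n. (Y n s k)\<^sup>2) = 1" using orth[of n s s] that by (simp add: power2_eq_square)
    show "\<And>k l. k \<in> {1..n} \<Longrightarrow> l \<in> {1..n} \<Longrightarrow> \<bar>C k l - C l k\<bar> \<le> 2 * Lgyy * eps"
      using wb that by auto
    show "0 \<le> 2 * Lgyy * eps" using L0 eps0 by simp
  qed
  have ynorm: "(\<Sum>k = 1..j. (y k)\<^sup>2) = 1" using orth[of j i i] j_bounds i_bounds unfolding y_def
    by (simp add: power2_eq_square)
  show False
  proof (cases "Lgyy * eps = 0")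
    case True
    have "S n s = 0" if "1 \<le> s" "s \<le> n" "n < j" for n s
    proof -
      have "2 * Lgyy * eps * real n / 2 = 0" using True by auto
      then show ?thesis using Sb[OF that] by linarith
    qed
    then have "yRy = 0" unfolding yRy_eq by (intro sum.neutral ballI) (auto intro!: sum.neutral)
    then show False using yRy_nz' by simp
  next
    case False
    then have Le: "Lgyy * eps > 0" using L0 eps0 by (simp add: less_le)
    have Bp: "B > 0" unfolding B_def using Le yRy_nz' j_bounds by (simp add: mult.assoc)
    have s3: "sqrt 3 < (2::real)"
      by (rule real_less_lsqrt) auto
    have "yRy = 0"
    proof (rule final_abstract[where om="2 * Lgyy * eps" and B=B and c="sqrt 3 / 2"])
      show "yRy = (\<Sum>n = 1..j - 1. \<Sum>s = 1..n. (y (Suc n))\<^sup>2 * S n s / d n s)" by (rule yRy_eq)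
      show "\<And>n s. 1 \<le> s \<Longrightarrow> s \<le> n \<Longrightarrow> n < j \<Longrightarrow> \<bar>S n s\<bar> \<le> 2 * Lgyy * eps * real n / 2"
        using Sb by simp
      show "(\<Sum>n = 1..j - 1. (y (Suc n))\<^sup>2) \<le> 1" using ysum_le[where y=y and j=j] ynorm by simp
      show "\<And>n s. 1 \<le> s \<Longrightarrow> s \<le> n \<Longrightarrow> n < j \<Longrightarrow> B < \<bar>d n s\<bar>"
        using dB unfolding d_def by auto
      show "B > 0" by (rule Bp)
      show "0 \<le> 2 * Lgyy * eps" using L0 eps0 by simp
      show "2 * Lgyy * eps * (real j)\<^sup>2 / 2 \<le> sqrt 3 / 2 * B * \<bar>yRy\<bar>"
        unfolding B_def using yRy_nz' by (simp add: field_simps)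
      show "sqrt 3 / 2 < 1" using s3 by simp
    qed
    then show False using yRy_nz' by simp
  qed
qed


end
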